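(* Let $G=(V,E)$ be a graph with $|V|=n$ vertices, and let $P_{\text{match}}(G)\subset\mathbb{R}^E$ be its matching polytope. Then \[\mathrm{xc}\big(P_{\text{match}}(G)\big)\leq \ln(n)\cdot n^3\cdot 1.5^n .\]
   Context: The matching polytope of $G=(V,E)$ is $P_{\text{match}}(G)=\mathrm{conv}\{\chi_M : M\subset E \text{ a matching of } G\}\subset\mathbb{R}^E$, where $\chi_M$ is the characteristic vector of $M$. For a polytope $P$, write $|P|$ for its number of facets (the minimal number of inequalities in a description $\{x: Ax\le b, Cx=e\}$ of $P$). An affine extension of $P\subset\mathbb{R}^d$ is a polyhedron $Q\subset\mathbb{R}^{d'}$ together with an affine map $\pi$ with $\pi(Q)=P$. The extension complexity is $\mathrm{xc}(P)=\min\{|Q| : Q \text{ an affine extension of } P\}$. *)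

theory Defs
  imports "HOL-Analysis.Analysis"
begin

definition simple_graph :: "'a set \<Rightarrow> 'a set set \<Rightarrow> bool" where
  "simple_graph V E \<longleftrightarrow> finite V \<and>
     (\<forall>e\<in>E. \<exists>u v. u \<in> V \<and> v \<in> V \<and> u \<noteq> v \<and> e = {u, v})"

definition is_matching :: "'a set set \<Rightarrow> 'a set set \<Rightarrow> bool" where
  "is_matching E M \<longleftrightarrow> M \<subseteq> E \<and> (\<forall>e1\<in>M. \<forall>e2\<in>M. e1 \<noteq> e2 \<longrightarrow> e1 \<inter> e2 = {})"

text \<open>Points of R^E are functions E-indexed, vanishing outside E.
  Convex hull = set of all finite convex combinations.\<close>
definition conv_hull_fun :: "('b \<Rightarrow> real) set \<Rightarrow> ('b \<Rightarrow> real) set" where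
  "conv_hull_fun S = {x. \<exists>(k::nat) u c. (\<forall>i<k. 0 \<le> u i \<and> c i \<in> S) \<and>
       (\<Sum>i<k. u i) = 1 \<and> x = (\<lambda>j. \<Sum>i<k. u i * c i j)}"

definition matching_polytope :: "'a set set \<Rightarrow> ('a set \<Rightarrow> real) set" where
  "matching_polytope E = conv_hull_fun {indicator M | M. is_matching E M}"

text \<open>P \<subseteq> R^D has an affine extension Q = {y \<in> R^d'. Ay \<le> b, Cy = e} described
  with m inequalities, together with an affine map \<pi> y = Ty + t with \<pi>(Q) = P.\<close>
definition has_ext_with_ineqs :: "'b set \<Rightarrow> ('b \<Rightarrow> real) set \<Rightarrow> nat \<Rightarrow> bool" where
  "has_ext_with_ineqs D P m \<longleftrightarrow>
     (\<exists>(d'::nat) (p::nat) (A::nat \<Rightarrow> nat \<Rightarrow> real) (b::nat \<Rightarrow> real)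
        (C::nat \<Rightarrow> nat \<Rightarrow> real) (e::nat \<Rightarrow> real) (T::'b \<Rightarrow> nat \<Rightarrow> real) (t::'b \<Rightarrow> real).
        (\<lambda>y. \<lambda>i. if i \<in> D then (\<Sum>j<d'. T i j * y j) + t i else 0) `
          {y::nat \<Rightarrow> real. (\<forall>j\<ge>d'. y j = 0) \<and>
             (\<forall>r<m. (\<Sum>j<d'. A r j * y j) \<le> b r) \<and>
             (\<forall>r<p. (\<Sum>j<d'. C r j * y j) = e r)} = P)"

definition xc :: "'b set \<Rightarrow> ('b \<Rightarrow> real) set \<Rightarrow> nat" where
  "xc D P = (LEAST m. has_ext_with_ineqs D P m)"

end

theory Submission
  imports Defs
begin
definition fconvex :: "('b \<Rightarrow> real) set \<Rightarrow> bool" where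
  "fconvex X \<longleftrightarrow> (\<forall>x\<in>X. \<forall>y\<in>X. \<forall>t. 0 \<le> t \<and> t \<le> 1 \<longrightarrow> (\<lambda>j. t * x j + (1 - t) * y j) \<in> X)"

lemma fconvexD: "fconvex X \<Longrightarrow> x \<in> X \<Longrightarrow> y \<in> X \<Longrightarrow> 0 \<le> t \<Longrightarrow> t \<le> 1 \<Longrightarrow>
  (\<lambda>j. t * x j + (1 - t) * y j) \<in> X"
  unfolding fconvex_def by blast

lemma fconvex_comb:
  fixes k :: nat and u :: "nat \<Rightarrow> real"
  assumes X: "fconvex X"
  shows "(\<forall>i<k. 0 \<le> u i \<and> c i \<in> X) \<Longrightarrow> (\<Sum>i<k. u i) = 1 \<Longrightarrow> (\<lambda>j. \<Sum>i<k. u i * c i j) \<in> X"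
proof (induction k arbitrary: u)
  case 0
  then show ?case by simp
next
  case (Suc k)
  have uk0: "0 \<le> u k" using Suc.prems by simp
  have "u k \<le> (\<Sum>i<Suc k. u i)"
    by (rule member_le_sum) (use Suc.prems in auto)
  hence uk: "0 \<le> u k" "u k \<le> 1" using uk0 Suc.prems by auto
  show ?case
  proof (cases "u k = 1")
    case True
    have "(\<Sum>i<k. u i) = 0" using Suc.prems True by simp
    hence z: "\<forall>i<k. u i = 0" using Suc.prems
      by (subst (asm) sum_nonneg_eq_0_iff) auto
    have "(\<lambda>j. \<Sum>i<Suc k. u i * c i j) = c k" using z True by (auto)
    then show ?thesis using Suc.prems by simp
  next
    case False
    define w where "w i = u i / (1 - u k)" for i
    have s: "(\<Sum>i<k. u i) = 1 - u k" using Suc.prems by simp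
    have "(\<Sum>i<k. w i) = 1" using False uk s unfolding w_def
      by (simp add: sum_divide_distrib[symmetric])
    moreover have "\<forall>i<k. 0 \<le> w i \<and> c i \<in> X" using Suc.prems uk unfolding w_def by auto
    ultimately have IH: "(\<lambda>j. \<Sum>i<k. w i * c i j) \<in> X" using Suc.IH by blast
    have ck: "c k \<in> X" using Suc.prems by auto
    have "(\<lambda>j. (1 - u k) * (\<Sum>i<k. w i * c i j) + (1 - (1 - u k)) * c k j) \<in> X"
    proof -
      have "0 \<le> 1 - u k" "1 - u k \<le> 1" using uk by auto
      then show ?thesis by (rule fconvexD[OF X IH ck])
    qed
    moreover have "(\<lambda>j. (1 - u k) * (\<Sum>i<k. w i * c i j) + (1 - (1 - u k)) * c k j)
        = (\<lambda>j. \<Sum>i<Suc k. u i * c i j)"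
      using False uk unfolding w_def by (auto simp: sum_distrib_left)
    ultimately show ?thesis by simp
  qed
qed

lemma conv_hull_fun_least: "fconvex X \<Longrightarrow> S \<subseteq> X \<Longrightarrow> conv_hull_fun S \<subseteq> X"
  unfolding conv_hull_fun_def using fconvex_comb[of X] by blast

lemma conv_hull_fun_base: "S \<subseteq> conv_hull_fun S"
proof
  fix x assume "x \<in> S"
  then show "x \<in> conv_hull_fun S" unfolding conv_hull_fun_def
    by (intro CollectI exI[of _ "1::nat"] exI[of _ "\<lambda>_. 1::real"] exI[of _ "\<lambda>_. x"]) auto
qed

lemma conv_hull_fun_mono: "S \<subseteq> T \<Longrightarrow> conv_hull_fun S \<subseteq> conv_hull_fun T"
  unfolding conv_hull_fun_def by blast

lemma sum_split_nat: "(\<Sum>i<k+l. f i) = (\<Sum>i<k. f i) + (\<Sum>i<l. f (i + k))"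
  for f :: "nat \<Rightarrow> real"
proof (induction l)
  case 0 then show ?case by simp
next
  case (Suc l) then show ?case by (simp add: add.commute)
qed

lemma fconvex_conv_hull_fun: "fconvex (conv_hull_fun S)"
  unfolding fconvex_def
proof (intro ballI allI impI)
  fix x y and t :: real
  assume xS: "x \<in> conv_hull_fun S" and yS: "y \<in> conv_hull_fun S" and t: "0 \<le> t \<and> t \<le> 1"
  obtain k :: nat and u c where
    x: "(\<forall>i<k. 0 \<le> u i \<and> c i \<in> S)" "(\<Sum>i<k. u i) = 1" "x = (\<lambda>j. \<Sum>i<k. u i * c i j)"
    using xS unfolding conv_hull_fun_def mem_Collect_eq by blast
  obtain l :: nat and w d where
    y: "(\<forall>i<l. 0 \<le> w i \<and> d i \<in> S)" "(\<Sum>i<l. w i) = 1" "y = (\<lambda>j. \<Sum>i<l. w i * d i j)"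
    using yS unfolding conv_hull_fun_def mem_Collect_eq by blast
  define u' where "u' i = (if i < k then t * u i else (1 - t) * w (i - k))" for i
  define c' where "c' i = (if i < k then c i else d (i - k))" for i
  have "(\<forall>i<k+l. 0 \<le> u' i \<and> c' i \<in> S)"
  proof (intro allI impI)
    fix i assume "i < k + l"
    then show "0 \<le> u' i \<and> c' i \<in> S"
      using x(1) y(1) t unfolding u'_def c'_def
      by (cases "i < k") auto
  qed
  moreover have "(\<Sum>i<k+l. u' i) = 1"
  proof -
    have "(\<Sum>i<k+l. u' i) = (\<Sum>i<k. t * u i) + (\<Sum>i<l. (1 - t) * w i)"
      unfolding sum_split_nat u'_def by simp
    also have "\<dots> = 1" using x(2) y(2) by (simp add: sum_distrib_left[symmetric])
    finally show ?thesis .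
  qed
  moreover have "(\<lambda>j. t * x j + (1 - t) * y j) = (\<lambda>j. \<Sum>i<k+l. u' i * c' i j)"
  proof
    fix j
    have "(\<Sum>i<k+l. u' i * c' i j) = (\<Sum>i<k. t * (u i * c i j)) + (\<Sum>i<l. (1 - t) * (w i * d i j))"
      unfolding sum_split_nat u'_def c'_def by (simp add: mult.assoc)
    then show "t * x j + (1 - t) * y j = (\<Sum>i<k+l. u' i * c' i j)"
      unfolding x(3) y(3) by (simp add: sum_distrib_left)
  qed
  ultimately show "(\<lambda>j. t * x j + (1 - t) * y j) \<in> conv_hull_fun S"
    unfolding conv_hull_fun_def by (intro CollectI exI[of _ "k+l"] exI[of _ u'] exI[of _ c']) simp
qed

lemma conv_hull_fun_comb:
  "(\<forall>i<k. 0 \<le> u i \<and> c i \<in> conv_hull_fun S) \<Longrightarrow> (\<Sum>i<k. u i) = 1 \<Longrightarrow>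
   (\<lambda>j. \<Sum>i<k. u i * c i j) \<in> conv_hull_fun S" for k :: nat
  by (rule fconvex_comb[OF fconvex_conv_hull_fun])

lemma conv_hull_fun_single: "conv_hull_fun {z} = {z}"
proof
  show "{z} \<subseteq> conv_hull_fun {z}" by (rule conv_hull_fun_base)
  show "conv_hull_fun {z} \<subseteq> {z}"
  proof (rule conv_hull_fun_least)
    show "fconvex {z}" unfolding fconvex_def
    proof (intro ballI allI impI)
      fix x y and t :: real assume "x \<in> {z}" "y \<in> {z}"
      then have "(\<lambda>j. t * x j + (1 - t) * y j) = z" by (auto simp: algebra_simps)
      then show "(\<lambda>j. t * x j + (1 - t) * y j) \<in> {z}" by simp
    qed
  qed simp
qed

definition crossing :: "'a set \<Rightarrow> 'a set \<Rightarrow> bool" where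
  "crossing A e \<longleftrightarrow> (\<exists>u v. e = {u,v} \<and> u \<in> A \<and> v \<notin> A)"

lemma crossing_pair: "crossing A {x,y} \<Longrightarrow> (y \<in> A) = (x \<notin> A)"
  unfolding crossing_def by (auto simp: doubleton_eq_iff)

lemma crossing_finite: "crossing A e \<Longrightarrow> finite e"
  unfolding crossing_def by auto

fun ispath :: "'a set set \<Rightarrow> 'a list \<Rightarrow> bool" where
  "ispath F (x # y # r) = ({x,y} \<in> F \<and> ispath F (y # r))"
| "ispath F _ = True"

fun dl :: "'a list \<Rightarrow> 'a set \<Rightarrow> real" where
  "dl (x # y # r) e = (if e = {x,y} then 1 else 0) - dl (y # r) e"
| "dl _ e = 0"

fun pdl :: "'a list \<Rightarrow> 'a \<Rightarrow> real" where
  "pdl (x # y # r) v = (if v = x \<or> v = y then 1 else 0) - pdl (y # r) v"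
| "pdl _ v = 0"

lemma pdl_formula:
  "distinct ws \<Longrightarrow> 2 \<le> length ws \<Longrightarrow>
   pdl ws v = (if v = hd ws then 1 else 0) + (if v = last ws then (-1) ^ length ws else 0)"
proof (induction ws)
  case Nil then show ?case by simp
next
  case (Cons x ws)
  then obtain y r where ws: "ws = y # r" by (cases ws) auto
  show ?case
  proof (cases r)
    case Nil
    then show ?thesis using Cons.prems ws by auto
  next
    case (Cons z r')
    have IH: "pdl (y # r) v = (if v = y then 1 else 0) + (if v = last (y # r) then (-1) ^ length (y # r) else 0)"
      using Cons.IH Cons.prems ws \<open>r = z # r'\<close> by auto
    have xy: "x \<noteq> y" "x \<noteq> last (y # r)" using Cons.prems ws by auto
    have e: "pdl (x # ws) v = (if v = x \<or> v = y then 1 else 0) - pdl (y # r) v" using ws by simp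
    show ?thesis
      unfolding e using IH xy ws by (cases "v = x"; cases "v = y"; cases "v = last (y # r)") auto
  qed
qed

lemma dl_sum: "finite F \<Longrightarrow> ispath F ws \<Longrightarrow> (\<Sum>e\<in>{e\<in>F. v \<in> e}. dl ws e) = pdl ws v"
proof (induction ws)
  case Nil then show ?case by simp
next
  case (Cons x ws)
  show ?case
  proof (cases ws)
    case Nil then show ?thesis by simp
  next
    case (Cons y r)
    have fin: "finite {e\<in>F. v \<in> e}" using Cons.prems by auto
    have "(\<Sum>e\<in>{e\<in>F. v \<in> e}. dl (x # y # r) e)
        = (\<Sum>e\<in>{e\<in>F. v \<in> e}. (if e = {x,y} then 1 else 0)) - (\<Sum>e\<in>{e\<in>F. v \<in> e}. dl (y # r) e)"
      by (simp add: sum_subtractf)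
    also have "(\<Sum>e\<in>{e\<in>F. v \<in> e}. (if e = {x,y} then 1 else 0)) = (if {x,y} \<in> {e\<in>F. v \<in> e} then 1 else (0::real))"
      using fin by (simp add: sum.delta')
    also have "\<dots> = (if v = x \<or> v = y then 1 else 0)" using Cons.prems \<open>ws = y # r\<close> by auto
    also have "(\<Sum>e\<in>{e\<in>F. v \<in> e}. dl (y # r) e) = pdl (y # r) v"
      using Cons.IH Cons.prems \<open>ws = y # r\<close> by auto
    finally show ?thesis using \<open>ws = y # r\<close> by simp
  qed
qed

lemma dl_support: "dl ws e \<noteq> 0 \<Longrightarrow> ispath F ws \<Longrightarrow> e \<in> F"
  by (induction ws e rule: dl.induct) (auto split: if_splits)

lemma dl_subset: "dl ws e \<noteq> 0 \<Longrightarrow> e \<subseteq> set ws"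
  by (induction ws e rule: dl.induct) (auto split: if_splits)

lemma dl_first: "distinct (x # y # r) \<Longrightarrow> dl (x # y # r) {x,y} = 1"
proof -
  assume d: "distinct (x # y # r)"
  have "dl (y # r) {x,y} = 0"
  proof (rule ccontr)
    assume "dl (y # r) {x, y} \<noteq> 0"
    then have "{x,y} \<subseteq> set (y # r)" by (rule dl_subset)
    then show False using d by auto
  qed
  then show ?thesis by simp
qed

lemma ispath_parity:
  "(\<forall>e\<in>F. crossing A e) \<Longrightarrow> ispath F ws \<Longrightarrow> i < length ws \<Longrightarrow>
   (ws ! i \<in> A) = ((ws ! 0 \<in> A) = even i)"
proof (induction ws arbitrary: i)
  case Nil then show ?case by simp
next
  case (Cons x ws)
  show ?case
  proof (cases i)
    case 0 then show ?thesis by simp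
  next
    case (Suc j)
    then obtain y r where ws: "ws = y # r" using Cons.prems by (cases ws) auto
    have IH: "(ws ! j \<in> A) = ((ws ! 0 \<in> A) = even j)"
      using Cons.IH[of j] Cons.prems ws Suc by auto
    have "crossing A {x,y}" using Cons.prems ws by auto
    then have "(y \<in> A) = (x \<notin> A)" by (rule crossing_pair)
    then show ?thesis using IH ws Suc by auto
  qed
qed

lemma ispath_take: "ispath F ws \<Longrightarrow> ispath F (take n ws)"
proof (induction ws arbitrary: n rule: ispath.induct)
  case (1 F x y r)
  show ?case
  proof (cases n)
    case 0 then show ?thesis by simp
  next
    case (Suc m)
    have "ispath F (take m (y # r))" using "1.IH" "1.prems" by simp
    then show ?thesis using 1 Suc by (cases m) auto
  qed
qed (simp_all add: take_Cons')

lemma ispath_snoc: "ispath F (ws @ [z]) \<longleftrightarrow> ispath F ws \<and> (ws \<noteq> [] \<longrightarrow> {last ws, z} \<in> F)"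
proof (induction ws)
  case Nil then show ?case by simp
next
  case (Cons x ws)
  then show ?case by (cases ws) auto
qed

lemma ispath_rev: "ispath F ws \<Longrightarrow> ispath F (rev ws)"
proof (induction ws)
  case Nil then show ?case by simp
next
  case (Cons x ws)
  show ?case
  proof (cases ws)
    case Nil then show ?thesis by simp
  next
    case (Cons y r)
    have "ispath F ws" "{x,y} \<in> F" using Cons.prems \<open>ws = y # r\<close> by auto
    moreover have "last (rev ws) = y" using \<open>ws = y # r\<close> by simp
    ultimately have "ispath F (rev ws @ [x])" unfolding ispath_snoc using Cons.IH
      by (auto simp: insert_commute)
    then show ?thesis by simp
  qed
qed

definition Paths :: "'a set set \<Rightarrow> 'a list set" where
  "Paths F = {ws. set ws \<subseteq> \<Union>F \<and> distinct ws \<and> ispath F ws \<and> 2 \<le> length ws}"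

lemma finite_Paths:
  assumes "finite F" "\<forall>e\<in>F. finite e"
  shows "finite (Paths F)"
proof -
  have fU: "finite (\<Union>F)" using assms by auto
  have "Paths F \<subseteq> {ws. set ws \<subseteq> \<Union>F \<and> length ws \<le> card (\<Union>F)}"
  proof
    fix ws assume "ws \<in> Paths F"
    then have "set ws \<subseteq> \<Union>F" "distinct ws" unfolding Paths_def by auto
    moreover have "length ws = card (set ws)" using \<open>distinct ws\<close> by (simp add: distinct_card)
    moreover have "card (set ws) \<le> card (\<Union>F)" using card_mono[OF fU \<open>set ws \<subseteq> \<Union>F\<close>] .
    ultimately show "ws \<in> {ws. set ws \<subseteq> \<Union>F \<and> length ws \<le> card (\<Union>F)}" by simp
  qed
  then show ?thesis using finite_lists_length_le[OF fU] by (rule finite_subset)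
qed

lemma rev_Paths: "ws \<in> Paths F \<Longrightarrow> rev ws \<in> Paths F"
  unfolding Paths_def using ispath_rev by auto

lemma head_cycle:
  assumes fin: "finite F" and cr: "\<forall>e\<in>F. crossing A e"
    and ws: "ws \<in> Paths F" and mx: "\<forall>ws'\<in>Paths F. length ws' \<le> length ws"
    and e: "e \<in> F" "hd ws \<in> e" "e \<noteq> {hd ws, hd (tl ws)}"
  shows "\<exists>d::'a set \<Rightarrow> real. (\<forall>e. d e \<noteq> 0 \<longrightarrow> e \<in> F) \<and> (\<exists>e. d e \<noteq> 0) \<and> (\<forall>v. (\<Sum>e\<in>{e\<in>F. v \<in> e}. d e) = 0)"
proof -
  have wsP: "set ws \<subseteq> \<Union>F" "distinct ws" "ispath F ws" "2 \<le> length ws"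
    using ws unfolding Paths_def by auto
  obtain x y r where wsx: "ws = x # y # r"
    using wsP(4) by (cases ws; cases "tl ws") auto
  obtain u v where uv: "e = {u,v}" "u \<in> A" "v \<notin> A" using cr e(1) unfolding crossing_def by blast
  obtain w where ew: "e = {x, w}" "w \<noteq> x"
    using e(2) uv wsx by (cases "x = u") (auto simp: insert_commute)
  have ey: "w \<noteq> y" using e(3) ew wsx by auto
  have wset: "w \<in> set ws"
  proof (rule ccontr)
    assume nw: "w \<notin> set ws"
    have "w # ws \<in> Paths F"
      unfolding Paths_def using wsP nw e(1) ew wsx by (auto simp: insert_commute)
    then show False using mx by fastforce
  qed
  then obtain j where j: "j < length ws" "ws ! j = w" by (auto simp: in_set_conv_nth)
  have j0: "j \<noteq> 0" using j ew wsx by (cases j) auto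
  have j1: "j \<noteq> 1" using j ey wsx by auto
  have par: "(ws ! j \<in> A) = ((ws ! 0 \<in> A) = even j)"
    using ispath_parity[OF cr wsP(3) j(1)] .
  have "crossing A {x, w}" using cr e(1) ew by auto
  then have "(w \<in> A) = (x \<notin> A)" by (rule crossing_pair)
  then have oj: "odd j" using par j wsx by auto
  define vs where "vs = take (Suc j) ws"
  have vsP: "distinct vs" "ispath F vs" using wsP unfolding vs_def by (auto intro: ispath_take)
  have lvs: "length vs = Suc j" using j unfolding vs_def by simp
  have hvs: "hd vs = x" unfolding vs_def using wsx by simp
  have lastvs: "last vs = w" unfolding vs_def using j by (simp add: take_Suc_conv_app_nth)
  obtain r' where vsx: "vs = x # y # r'"
    unfolding vs_def using wsx j0 j1 by (cases j; cases "j - 1") auto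
  define d where "d e' = dl vs e' - (if e' = {w, x} then 1 else 0)" for e'
  have supp: "\<forall>e'. d e' \<noteq> 0 \<longrightarrow> e' \<in> F"
  proof (intro allI impI)
    fix e' assume "d e' \<noteq> 0"
    then have "dl vs e' \<noteq> 0 \<or> e' = {w, x}" unfolding d_def by (auto split: if_splits)
    then show "e' \<in> F" using dl_support[OF _ vsP(2)] e(1) ew by (auto simp: insert_commute)
  qed
  have "d {x, y} = 1"
  proof -
    have "dl vs {x,y} = 1" using vsP(1) unfolding vsx by (rule dl_first)
    moreover have "{x, y} \<noteq> {w, x}" using ey ew by (auto simp: doubleton_eq_iff)
    ultimately show ?thesis unfolding d_def by simp
  qed
  then have nz: "\<exists>e. d e \<noteq> 0" by (intro exI[of _ "{x,y}"]) simp
  have vert: "(\<Sum>e\<in>{e\<in>F. v \<in> e}. d e) = 0" for v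
  proof -
    have fin': "finite {e\<in>F. v \<in> e}" using fin by simp
    have "(\<Sum>e\<in>{e\<in>F. v \<in> e}. d e)
        = (\<Sum>e\<in>{e\<in>F. v \<in> e}. dl vs e) - (\<Sum>e\<in>{e\<in>F. v \<in> e}. (if e = {w,x} then 1 else 0))"
      unfolding d_def by (simp add: sum_subtractf)
    also have "(\<Sum>e\<in>{e\<in>F. v \<in> e}. (if e = {w,x} then 1 else 0)) = (if {w,x} \<in> {e\<in>F. v \<in> e} then 1 else (0::real))"
      using fin' by (simp add: sum.delta')
    also have "\<dots> = (if v = w \<or> v = x then 1 else 0)" using e(1) ew by (auto simp: insert_commute)
    also have "(\<Sum>e\<in>{e\<in>F. v \<in> e}. dl vs e) = pdl vs v" using dl_sum[OF fin vsP(2)] .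
    also have "pdl vs v = (if v = x then 1 else 0) + (if v = w then (-1) ^ Suc j else 0)"
    proof -
      have "2 \<le> length vs" using lvs j0 by simp
      then have "pdl vs v = (if v = hd vs then 1 else 0) + (if v = last vs then (-1) ^ length vs else 0)"
        by (rule pdl_formula[OF vsP(1)])
      then show ?thesis unfolding hvs lastvs lvs .
    qed
    also have "(-1::real) ^ Suc j = 1" using oj by simp
    finally show ?thesis using ew(2) by auto
  qed
  show ?thesis
    by (intro exI[where x=d] conjI allI supp nz vert)
qed

lemma exists_d:
  assumes fin: "finite F" and ne: "F \<noteq> {}" and cr: "\<forall>e\<in>F. crossing A e"
  shows "\<exists>d::'a set \<Rightarrow> real. (\<forall>e. d e \<noteq> 0 \<longrightarrow> e \<in> F) \<and> (\<exists>e. d e \<noteq> 0) \<and>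
     (\<forall>v. (\<Sum>e\<in>{e\<in>F. v \<in> e}. d e) = 0 \<or> (\<forall>e1\<in>F. \<forall>e2\<in>F. v \<in> e1 \<longrightarrow> v \<in> e2 \<longrightarrow> e1 = e2))"
proof -
  have fe: "\<forall>e\<in>F. finite e" using cr crossing_finite by blast
  have finP: "finite (Paths F)" using finite_Paths[OF fin fe] .
  obtain e0 where e0: "e0 \<in> F" using ne by blast
  obtain u v where uv: "e0 = {u,v}" "u \<in> A" "v \<notin> A" using cr e0 unfolding crossing_def by blast
  have "[u, v] \<in> Paths F" unfolding Paths_def using uv e0 by auto
  then have neP: "Paths F \<noteq> {}" by blast
  define L where "L = Max (length ` Paths F)"
  have "L \<in> length ` Paths F" unfolding L_def using finP neP by simp
  then obtain ws where ws: "ws \<in> Paths F" "length ws = L" by blast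
  have mx: "\<forall>ws'\<in>Paths F. length ws' \<le> length ws"
    using ws finP unfolding L_def by simp
  have rws: "rev ws \<in> Paths F" using ws(1) by (rule rev_Paths)
  have mx': "\<forall>ws'\<in>Paths F. length ws' \<le> length (rev ws)" using mx by simp
  have wsP: "distinct ws" "ispath F ws" "2 \<le> length ws"
    using ws unfolding Paths_def by auto
  let ?C = "\<lambda>d::'a set \<Rightarrow> real. (\<forall>e. d e \<noteq> 0 \<longrightarrow> e \<in> F) \<and> (\<exists>e. d e \<noteq> 0) \<and> (\<forall>v. (\<Sum>e\<in>{e\<in>F. v \<in> e}. d e) = 0)"
  show ?thesis
  proof (cases "\<exists>e\<in>F. hd ws \<in> e \<and> e \<noteq> {hd ws, hd (tl ws)}")
    case True
    then obtain e where "e \<in> F" "hd ws \<in> e" "e \<noteq> {hd ws, hd (tl ws)}" by blast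
    then obtain d where "?C d" using head_cycle[OF fin cr ws(1) mx] by blast
    then show ?thesis by blast
  next
    case False
    note F1 = False
    show ?thesis
    proof (cases "\<exists>e\<in>F. hd (rev ws) \<in> e \<and> e \<noteq> {hd (rev ws), hd (tl (rev ws))}")
      case True
      then obtain e where "e \<in> F" "hd (rev ws) \<in> e" "e \<noteq> {hd (rev ws), hd (tl (rev ws))}" by blast
      then obtain d where "?C d" using head_cycle[OF fin cr rws mx'] by blast
      then show ?thesis by blast
    next
      case False
      note F2 = False
      obtain x y r where wsx: "ws = x # y # r"
        using wsP(3) by (cases ws; cases "tl ws") auto
      define d where "d = dl ws"
      have supp: "\<forall>e. d e \<noteq> 0 \<longrightarrow> e \<in> F" unfolding d_def using dl_support[OF _ wsP(2)] by blast
      have "d {x,y} = 1" unfolding d_def wsx using wsP(1) wsx by (intro dl_first) simp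
      then have nz: "\<exists>e. d e \<noteq> 0" by (intro exI[of _ "{x,y}"]) simp
      have vert: "(\<Sum>e\<in>{e\<in>F. v \<in> e}. d e) = 0 \<or> (\<forall>e1\<in>F. \<forall>e2\<in>F. v \<in> e1 \<longrightarrow> v \<in> e2 \<longrightarrow> e1 = e2)" for v
      proof (cases "v = hd ws \<or> v = last ws")
        case True
        then show ?thesis
        proof
          assume "v = hd ws"
          then show ?thesis using F1 by blast
        next
          assume "v = last ws"
          then have "v = hd (rev ws)" using wsx by (simp add: hd_rev)
          then show ?thesis using F2 by blast
        qed
      next
        case False
        have "(\<Sum>e\<in>{e\<in>F. v \<in> e}. d e) = pdl ws v" unfolding d_def using dl_sum[OF fin wsP(2)] .
        also have "\<dots> = 0" using pdl_formula[OF wsP(1) wsP(3)] False by simp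
        finally show ?thesis by blast
      qed
      show ?thesis
        by (intro exI[where x=d] conjI allI supp nz vert)
    qed
  qed
qed

definition matchings_in :: "'a set set \<Rightarrow> ('a set \<Rightarrow> real) set" where
  "matchings_in F = {indicator M | M. M \<subseteq> F \<and> (\<forall>e1\<in>M. \<forall>e2\<in>M. e1 \<noteq> e2 \<longrightarrow> e1 \<inter> e2 = {})}"

definition feas :: "'a set set \<Rightarrow> ('a set \<Rightarrow> real) \<Rightarrow> bool" where
  "feas F z \<longleftrightarrow> (\<forall>e. e \<notin> F \<longrightarrow> z e = 0) \<and> (\<forall>e\<in>F. 0 \<le> z e) \<and> (\<forall>v. (\<Sum>e\<in>{e\<in>F. v \<in> e}. z e) \<le> 1)"

lemma feas_le1:
  assumes fin: "finite F" and ne: "\<forall>e\<in>F. e \<noteq> {}" and fz: "feas F z" and e: "e \<in> F"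
  shows "z e \<le> 1"
proof -
  obtain v where v: "v \<in> e" using ne e by blast
  have "z e \<le> (\<Sum>e\<in>{e\<in>F. v \<in> e}. z e)"
    by (rule member_le_sum) (use fin fz e v in \<open>auto simp: feas_def\<close>)
  also have "\<dots> \<le> 1" using fz by (simp add: feas_def)
  finally show ?thesis .
qed

lemma step_ok:
  assumes fin: "finite F" and ne: "\<forall>e\<in>F. e \<noteq> {}" and fz: "feas F z"
    and dsupp: "\<forall>e. d e \<noteq> 0 \<longrightarrow> e \<in> {e\<in>F. 0 < z e \<and> z e < 1}"
    and dv: "\<forall>v. (\<Sum>e\<in>{e\<in>{e\<in>F. 0 < z e \<and> z e < 1}. v \<in> e}. d e) = 0 \<or>
       (\<forall>e1\<in>{e\<in>F. 0 < z e \<and> z e < 1}. \<forall>e2\<in>{e\<in>F. 0 < z e \<and> z e < 1}. v \<in> e1 \<longrightarrow> v \<in> e2 \<longrightarrow> e1 = e2)"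
    and bnd: "\<forall>e\<in>F. 0 \<le> z e + t * d e \<and> z e + t * d e \<le> 1"
  shows "feas F (\<lambda>e. z e + t * d e)"
proof -
  define Fr where "Fr = {e\<in>F. 0 < z e \<and> z e < 1}"
  have z0: "\<forall>e. e \<notin> F \<longrightarrow> z e = 0" and znn: "\<forall>e\<in>F. 0 \<le> z e"
    and zv: "\<forall>v. (\<Sum>e\<in>{e\<in>F. v \<in> e}. z e) \<le> 1" using fz unfolding feas_def by auto
  have zle: "\<forall>e\<in>F. z e \<le> 1" using feas_le1[OF fin ne fz] by blast
  have vert: "(\<Sum>e\<in>{e\<in>F. v \<in> e}. z e + t * d e) \<le> 1" for v
  proof -
    define S where "S = {e\<in>F. v \<in> e}"
    define S' where "S' = {e\<in>Fr. v \<in> e}"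
    have finS: "finite S" using fin unfolding S_def by simp
    have S'S: "S' \<subseteq> S" unfolding S_def S'_def Fr_def by auto
    have dS: "(\<Sum>e\<in>S. d e) = (\<Sum>e\<in>S'. d e)"
      by (rule sum.mono_neutral_right[OF finS S'S]) (use dsupp in \<open>auto simp: S'_def S_def Fr_def\<close>)
    have split: "(\<Sum>e\<in>S. z e + t * d e) = (\<Sum>e\<in>S. z e) + t * (\<Sum>e\<in>S. d e)"
      by (simp add: sum.distrib sum_distrib_left)
    have zS: "(\<Sum>e\<in>S. z e) \<le> 1" using zv unfolding S_def by blast
    show ?thesis
    proof (cases "(\<Sum>e\<in>S'. d e) = 0")
      case True
      then show ?thesis using split dS zS unfolding S_def by simp
    next
      case False
      then have deg: "\<forall>e1\<in>S'. \<forall>e2\<in>S'. e1 = e2" using dv unfolding S'_def Fr_def by blast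
      show ?thesis
      proof (cases "S' = {}")
        case True
        then show ?thesis using False by simp
      next
        case False
        then obtain e0 where e0: "e0 \<in> S'" by blast
        then have e0F: "e0 \<in> S" "0 < z e0" "z e0 < 1" using S'S unfolding S'_def Fr_def by auto
        have others: "z e = 0 \<and> d e = 0" if "e \<in> S - {e0}" for e
        proof -
          have eS: "e \<in> F" "v \<in> e" "e \<noteq> e0" using that unfolding S_def by auto
          have "e \<notin> S'" using deg e0 eS by blast
          then have nfr: "\<not> (0 < z e \<and> z e < 1)" using eS unfolding S'_def Fr_def by auto
          have de: "d e = 0" using dsupp nfr by blast
          have "z e \<noteq> 1"
          proof
            assume z1: "z e = 1"
            have "(\<Sum>e\<in>{e, e0}. z e) \<le> (\<Sum>e\<in>S. z e)"
              by (rule sum_mono2[OF finS]) (use that e0F znn in \<open>auto simp: S_def\<close>)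
            moreover have "(\<Sum>e\<in>{e, e0}. z e) = z e + z e0" using eS by simp
            ultimately show False using z1 e0F zS by simp
          qed
          then have "z e = 0" using nfr znn zle eS by force
          then show ?thesis using de by simp
        qed
        have "(\<Sum>e\<in>S. z e + t * d e) = (z e0 + t * d e0) + (\<Sum>e\<in>S - {e0}. z e + t * d e)"
          using e0F(1) finS by (simp add: sum.remove)
        also have "(\<Sum>e\<in>S - {e0}. z e + t * d e) = 0"
          using others by (intro sum.neutral) auto
        also have "z e0 + t * d e0 \<le> 1" using bnd e0F(1) unfolding S_def by auto
        finally show ?thesis unfolding S_def by simp
      qed
    qed
  qed
  show ?thesis unfolding feas_def
  proof (intro conjI allI impI ballI)
    fix e assume "e \<notin> F"
    then show "z e + t * d e = 0" using z0 dsupp by auto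
  next
    fix e assume "e \<in> F"
    then show "0 \<le> z e + t * d e" using bnd by blast
  next
    fix v show "(\<Sum>e\<in>{e\<in>F. v \<in> e}. z e + t * d e) \<le> 1" by (rule vert)
  qed
qed


lemma bip_base:
  assumes fin: "finite F" and ne: "\<forall>e\<in>F. e \<noteq> {}" and fz: "feas F z"
    and nofr: "{e\<in>F. 0 < z e \<and> z e < 1} = {}"
  shows "z \<in> matchings_in F"
proof -
  have z0: "\<forall>e. e \<notin> F \<longrightarrow> z e = 0" and znn: "\<forall>e\<in>F. 0 \<le> z e"
    and zv: "\<forall>v. (\<Sum>e\<in>{e\<in>F. v \<in> e}. z e) \<le> 1" using fz unfolding feas_def by auto
  have zle: "\<forall>e\<in>F. z e \<le> 1" using feas_le1[OF fin ne fz] by blast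
  define M where "M = {e\<in>F. z e = 1}"
  have zM: "z = indicator M"
  proof
    fix e
    show "z e = indicator M e"
    proof (cases "e \<in> F")
      case True
      then have "z e = 0 \<or> z e = 1" using nofr znn zle by force
      then show ?thesis using True unfolding M_def by (auto simp: indicator_def)
    next
      case False
      then show ?thesis using z0 unfolding M_def by (auto simp: indicator_def)
    qed
  qed
  have match: "\<forall>e1\<in>M. \<forall>e2\<in>M. e1 \<noteq> e2 \<longrightarrow> e1 \<inter> e2 = {}"
  proof (intro ballI impI)
    fix e1 e2 assume e: "e1 \<in> M" "e2 \<in> M" "e1 \<noteq> e2"
    show "e1 \<inter> e2 = {}"
    proof (rule ccontr)
      assume "e1 \<inter> e2 \<noteq> {}"
      then obtain v where v: "v \<in> e1" "v \<in> e2" by blast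
      define S where "S = {e\<in>F. v \<in> e}"
      have finS: "finite S" using fin unfolding S_def by simp
      have "(\<Sum>e\<in>{e1, e2}. z e) \<le> (\<Sum>e\<in>S. z e)"
        by (rule sum_mono2[OF finS]) (use e v znn in \<open>auto simp: S_def M_def\<close>)
      moreover have "(\<Sum>e\<in>{e1, e2}. z e) = 2" using e unfolding M_def by simp
      moreover have "(\<Sum>e\<in>S. z e) \<le> 1" using zv unfolding S_def by blast
      ultimately show False by simp
    qed
  qed
  have "M \<subseteq> F" unfolding M_def by auto
  then show ?thesis unfolding matchings_in_def using zM match by blast
qed

lemma bip_integral_aux:
  assumes fin: "finite F" and cr: "\<forall>e\<in>F. crossing A e"
  shows "feas F z \<Longrightarrow> card {e\<in>F. 0 < z e \<and> z e < 1} = n \<Longrightarrow> z \<in> conv_hull_fun (matchings_in F)"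
proof (induction n arbitrary: z rule: less_induct)
  case (less n z)
  have ne: "\<forall>e\<in>F. e \<noteq> {}" using cr unfolding crossing_def by auto
  define Fr where "Fr = {e\<in>F. 0 < z e \<and> z e < 1}"
  have fz: "feas F z" using less.prems by simp
  have z0: "\<forall>e. e \<notin> F \<longrightarrow> z e = 0" and znn: "\<forall>e\<in>F. 0 \<le> z e"
    using fz unfolding feas_def by auto
  have zle: "\<forall>e\<in>F. z e \<le> 1" using feas_le1[OF fin ne fz] by blast
  show ?case
  proof (cases "Fr = {}")
    case True
    then have "z \<in> matchings_in F" using bip_base[OF fin ne fz] unfolding Fr_def by blast
    then show ?thesis using conv_hull_fun_base by blast
  next
    case False
    have finFr: "finite Fr" using fin unfolding Fr_def by simp
    have crFr: "\<forall>e\<in>Fr. crossing A e" using cr unfolding Fr_def by auto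
    obtain d :: "'a set \<Rightarrow> real" where dsupp: "\<forall>e. d e \<noteq> 0 \<longrightarrow> e \<in> Fr" and dnz: "\<exists>e. d e \<noteq> 0"
      and dv: "\<forall>v. (\<Sum>e\<in>{e\<in>Fr. v \<in> e}. d e) = 0 \<or> (\<forall>e1\<in>Fr. \<forall>e2\<in>Fr. v \<in> e1 \<longrightarrow> v \<in> e2 \<longrightarrow> e1 = e2)"
      using exists_d[OF finFr False crFr] by blast
    define pos where "pos = {e. d e \<noteq> 0}"
    have posFr: "pos \<subseteq> Fr" using dsupp unfolding pos_def by auto
    have finpos: "finite pos" using finite_subset[OF posFr finFr] .
    have nepos: "pos \<noteq> {}" using dnz unfolding pos_def by auto
    define ra where "ra e = (if d e > 0 then (1 - z e) / d e else z e / (- d e))" for e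
    define rb where "rb e = (if d e > 0 then z e / d e else (1 - z e) / (- d e))" for e
    define \<alpha> where "\<alpha> = Min (ra ` pos)"
    define \<beta> where "\<beta> = Min (rb ` pos)"
    have frac: "0 < z e \<and> z e < 1 \<and> e \<in> F" if "e \<in> pos" for e
      using that posFr unfolding Fr_def by auto
    have ra_pos: "0 < ra e" if "e \<in> pos" for e
      using frac[OF that] that unfolding ra_def pos_def by (auto simp: field_simps)
    have rb_pos: "0 < rb e" if "e \<in> pos" for e
      using frac[OF that] that unfolding rb_def pos_def by (auto simp: field_simps)
    have a_pos: "0 < \<alpha>" unfolding \<alpha>_def using finpos nepos ra_pos by (simp add: Min_gr_iff)
    have b_pos: "0 < \<beta>" unfolding \<beta>_def using finpos nepos rb_pos by (simp add: Min_gr_iff)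
    have a_le: "\<alpha> \<le> ra e" if "e \<in> pos" for e unfolding \<alpha>_def using finpos that by simp
    have b_le: "\<beta> \<le> rb e" if "e \<in> pos" for e unfolding \<beta>_def using finpos that by simp
    have "\<alpha> \<in> ra ` pos" unfolding \<alpha>_def using finpos nepos by (intro Min_in) auto
    then obtain e1 where e1: "e1 \<in> pos" "ra e1 = \<alpha>" by (metis imageE)
    have "\<beta> \<in> rb ` pos" unfolding \<beta>_def using finpos nepos by (intro Min_in) auto
    then obtain e2 where e2: "e2 \<in> pos" "rb e2 = \<beta>" by (metis imageE)
    have bnd1: "\<forall>e\<in>F. 0 \<le> z e + \<alpha> * d e \<and> z e + \<alpha> * d e \<le> 1"
    proof
      fix e assume eF: "e \<in> F"
      show "0 \<le> z e + \<alpha> * d e \<and> z e + \<alpha> * d e \<le> 1"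
      proof (cases "d e = 0")
        case True then show ?thesis using eF znn zle by simp
      next
        case False
        then have ep: "e \<in> pos" unfolding pos_def by simp
        have al: "\<alpha> \<le> ra e" using a_le[OF ep] .
        show ?thesis
        proof (cases "d e > 0")
          case True
          then have "\<alpha> * d e \<le> 1 - z e" using al unfolding ra_def by (simp add: pos_le_divide_eq)
          moreover have "0 \<le> \<alpha> * d e" using True a_pos by simp
          moreover have "z e \<le> 1" "0 \<le> z e" using zle znn eF by auto
          ultimately show ?thesis by linarith
        next
          case nd: False
          then have dn: "d e < 0" using False by simp
          have nd': "0 < - d e" using dn by simp
          have "\<alpha> \<le> (z e) / (- d e)" using al nd unfolding ra_def by simp
          then have "\<alpha> * (- d e) \<le> z e" using pos_le_divide_eq[OF nd'] by blast
          moreover have "\<alpha> * d e \<le> 0" using dn a_pos by (simp add: mult_pos_neg less_imp_le)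
          moreover have "z e \<le> 1" "0 \<le> z e" using zle znn eF by auto
          ultimately show ?thesis by linarith
        qed
      qed
    qed
    have bnd2: "\<forall>e\<in>F. 0 \<le> z e + (- \<beta>) * d e \<and> z e + (- \<beta>) * d e \<le> 1"
    proof
      fix e assume eF: "e \<in> F"
      show "0 \<le> z e + (- \<beta>) * d e \<and> z e + (- \<beta>) * d e \<le> 1"
      proof (cases "d e = 0")
        case True then show ?thesis using eF znn zle by simp
      next
        case False
        then have ep: "e \<in> pos" unfolding pos_def by simp
        have bl: "\<beta> \<le> rb e" using b_le[OF ep] .
        show ?thesis
        proof (cases "d e > 0")
          case True
          then have "\<beta> * d e \<le> z e" using bl unfolding rb_def by (simp add: pos_le_divide_eq)
          moreover have "0 \<le> \<beta> * d e" using True b_pos by simp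
          moreover have "z e \<le> 1" "0 \<le> z e" using zle znn eF by auto
          ultimately show ?thesis by linarith
        next
          case nd: False
          then have dn: "d e < 0" using False by simp
          have nd': "0 < - d e" using dn by simp
          have "\<beta> \<le> (1 - z e) / (- d e)" using bl nd unfolding rb_def by simp
          then have "\<beta> * (- d e) \<le> 1 - z e" using pos_le_divide_eq[OF nd'] by blast
          moreover have "\<beta> * d e \<le> 0" using dn b_pos by (simp add: mult_pos_neg less_imp_le)
          moreover have "z e \<le> 1" "0 \<le> z e" using zle znn eF by auto
          ultimately show ?thesis by linarith
        qed
      qed
    qed
    define z1 where "z1 e = z e + \<alpha> * d e" for e
    define z2 where "z2 e = z e + (- \<beta>) * d e" for e
    have dv': "\<forall>v. (\<Sum>e\<in>{e\<in>{e\<in>F. 0 < z e \<and> z e < 1}. v \<in> e}. d e) = 0 \<or>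
       (\<forall>e1\<in>{e\<in>F. 0 < z e \<and> z e < 1}. \<forall>e2\<in>{e\<in>F. 0 < z e \<and> z e < 1}. v \<in> e1 \<longrightarrow> v \<in> e2 \<longrightarrow> e1 = e2)"
      using dv unfolding Fr_def .
    have dsupp': "\<forall>e. d e \<noteq> 0 \<longrightarrow> e \<in> {e\<in>F. 0 < z e \<and> z e < 1}" using dsupp unfolding Fr_def .
    have fz1: "feas F z1" unfolding z1_def by (rule step_ok[OF fin ne fz dsupp' dv' bnd1])
    have fz2: "feas F z2" unfolding z2_def by (rule step_ok[OF fin ne fz dsupp' dv' bnd2])
    have sub1: "{e\<in>F. 0 < z1 e \<and> z1 e < 1} \<subseteq> Fr - {e1}"
    proof
      fix e assume e: "e \<in> {e\<in>F. 0 < z1 e \<and> z1 e < 1}"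
      have "e \<in> Fr"
      proof (cases "d e = 0")
        case True then show ?thesis using e unfolding z1_def Fr_def by simp
      next
        case False then show ?thesis using posFr unfolding pos_def by auto
      qed
      moreover have "e \<noteq> e1"
      proof
        assume ee: "e = e1"
        have "z1 e1 = 1 \<or> z1 e1 = 0"
        proof (cases "d e1 > 0")
          case True
          then show ?thesis using e1(2)[symmetric] unfolding z1_def ra_def by (simp add: field_simps)
        next
          case False
          then have "d e1 \<noteq> 0" using e1(1) unfolding pos_def by simp
          then show ?thesis using e1(2)[symmetric] False unfolding z1_def ra_def by (simp add: field_simps)
        qed
        then show False using e ee by auto
      qed
      ultimately show "e \<in> Fr - {e1}" by simp
    qed
    have sub2: "{e\<in>F. 0 < z2 e \<and> z2 e < 1} \<subseteq> Fr - {e2}"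
    proof
      fix e assume e: "e \<in> {e\<in>F. 0 < z2 e \<and> z2 e < 1}"
      have "e \<in> Fr"
      proof (cases "d e = 0")
        case True then show ?thesis using e unfolding z2_def Fr_def by simp
      next
        case False then show ?thesis using posFr unfolding pos_def by auto
      qed
      moreover have "e \<noteq> e2"
      proof
        assume ee: "e = e2"
        have "z2 e2 = 1 \<or> z2 e2 = 0"
        proof (cases "d e2 > 0")
          case True
          then show ?thesis using e2(2)[symmetric] unfolding z2_def rb_def by (simp add: field_simps)
        next
          case False
          then have "d e2 \<noteq> 0" using e2(1) unfolding pos_def by simp
          then show ?thesis using e2(2)[symmetric] False unfolding z2_def rb_def by (simp add: field_simps)
        qed
        then show False using e ee by auto
      qed
      ultimately show "e \<in> Fr - {e2}" by simp
    qed
    have c1: "card {e\<in>F. 0 < z1 e \<and> z1 e < 1} < n"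
    proof -
      have "card {e\<in>F. 0 < z1 e \<and> z1 e < 1} \<le> card (Fr - {e1})"
        using sub1 finFr by (intro card_mono) auto
      also have "\<dots> < card Fr" using e1(1) posFr finFr by (intro card_Diff1_less) auto
      finally show ?thesis using less.prems unfolding Fr_def by simp
    qed
    have c2: "card {e\<in>F. 0 < z2 e \<and> z2 e < 1} < n"
    proof -
      have "card {e\<in>F. 0 < z2 e \<and> z2 e < 1} \<le> card (Fr - {e2})"
        using sub2 finFr by (intro card_mono) auto
      also have "\<dots> < card Fr" using e2(1) posFr finFr by (intro card_Diff1_less) auto
      finally show ?thesis using less.prems unfolding Fr_def by simp
    qed
    have in1: "z1 \<in> conv_hull_fun (matchings_in F)" using less.IH[OF c1 fz1 refl] .
    have in2: "z2 \<in> conv_hull_fun (matchings_in F)" using less.IH[OF c2 fz2 refl] .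
    define t where "t = \<beta> / (\<alpha> + \<beta>)"
    have t01: "0 \<le> t" "t \<le> 1" unfolding t_def using a_pos b_pos by (auto simp: field_simps)
    have "(\<lambda>j. t * z1 j + (1 - t) * z2 j) \<in> conv_hull_fun (matchings_in F)"
      by (rule fconvexD[OF fconvex_conv_hull_fun in1 in2 t01])
    moreover have "(\<lambda>j. t * z1 j + (1 - t) * z2 j) = z"
    proof
      fix j
      have ne0: "\<alpha> + \<beta> \<noteq> 0" using a_pos b_pos by simp
      have h: "t * \<alpha> = (1 - t) * \<beta>"
      proof -
        have "1 - t = \<alpha> / (\<alpha> + \<beta>)" unfolding t_def using ne0 by (simp add: field_simps)
        then show ?thesis unfolding t_def by simp
      qed
      have "t * z1 j + (1 - t) * z2 j = z j + (t * \<alpha>) * d j - ((1 - t) * \<beta>) * d j"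
        unfolding z1_def z2_def by (simp add: algebra_simps)
      then show "t * z1 j + (1 - t) * z2 j = z j" using h by simp
    qed
    ultimately show ?thesis by simp
  qed
qed

theorem bip_integral:
  assumes "finite F" "\<forall>e\<in>F. crossing A e" "feas F z"
  shows "z \<in> conv_hull_fun (matchings_in F)"
  using bip_integral_aux[OF assms(1,2) assms(3) refl] .

definition lin :: "(('j \<Rightarrow> real) \<Rightarrow> real) \<Rightarrow> bool" where
  "lin L \<longleftrightarrow> (\<forall>x y. L (\<lambda>j. x j + y j) = L x + L y) \<and> (\<forall>c x. L (\<lambda>j. c * x j) = c * L x)"

definition dlt :: "'j \<Rightarrow> 'j \<Rightarrow> real" where
  "dlt a = (\<lambda>i. if i = a then 1 else 0)"

lemma lin_zero: "lin L \<Longrightarrow> L (\<lambda>_. 0) = 0"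
proof -
  assume "lin L"
  then have "\<forall>c x. L (\<lambda>j. c * x j) = c * L x" unfolding lin_def by blast
  from this[rule_format, of 0 "\<lambda>_. 0"] show ?thesis by simp
qed

lemma lin_repr:
  assumes fin: "finite J" and L: "lin L"
  shows "(\<forall>j. j \<notin> J \<longrightarrow> y j = 0) \<Longrightarrow> L y = (\<Sum>j\<in>J. L (dlt j) * y j)"
  using fin
proof (induction J arbitrary: y rule: finite_induct)
  case empty
  then have "y = (\<lambda>_. 0)" by auto
  then show ?case using lin_zero[OF L] by simp
next
  case (insert a J)
  define y' where "y' j = (if j = a then 0 else y j)" for j
  have y'0: "\<forall>j. j \<notin> J \<longrightarrow> y' j = 0" using insert.prems unfolding y'_def by auto
  have "y = (\<lambda>j. y' j + (\<lambda>i. y a * dlt a i) j)" unfolding y'_def dlt_def by auto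
  then have "L y = L y' + L (\<lambda>i. y a * dlt a i)" using L unfolding lin_def by metis
  also have "L (\<lambda>i. y a * dlt a i) = y a * L (dlt a)" using L unfolding lin_def by blast
  also have "L y' = (\<Sum>j\<in>J. L (dlt j) * y' j)" using insert.IH y'0 by blast
  also have "(\<Sum>j\<in>J. L (dlt j) * y' j) = (\<Sum>j\<in>J. L (dlt j) * y j)"
    using insert.hyps unfolding y'_def by (intro sum.cong) auto
  finally show ?case using insert.hyps by (simp add: mult.commute)
qed

lemma reindex_lin:
  assumes fin: "finite J" and L: "lin L" and f: "bij_betw f {0..<card J} J"
    and y0: "\<forall>j. j \<notin> J \<longrightarrow> y j = 0"
  shows "(\<Sum>k<card J. L (dlt (f k)) * y (f k)) = L y"
proof -
  have "(\<Sum>k<card J. L (dlt (f k)) * y (f k)) = (\<Sum>j\<in>J. L (dlt j) * y j)"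
    using sum.reindex_bij_betw[OF f, of "\<lambda>j. L (dlt j) * y j"] by (simp add: lessThan_atLeast0)
  also have "\<dots> = L y" using lin_repr[OF fin L y0] by simp
  finally show ?thesis .
qed

lemma ext_general:
  fixes J :: "'j set" and R :: "'r set" and Q :: "'q set"
    and Lr :: "'r \<Rightarrow> ('j \<Rightarrow> real) \<Rightarrow> real" and br :: "'r \<Rightarrow> real"
    and Lq :: "'q \<Rightarrow> ('j \<Rightarrow> real) \<Rightarrow> real" and eq :: "'q \<Rightarrow> real"
    and Tp :: "'b \<Rightarrow> ('j \<Rightarrow> real) \<Rightarrow> real" and t :: "'b \<Rightarrow> real"
  assumes finJ: "finite J" and finR: "finite R" and finQ: "finite Q"
    and linR: "\<forall>r\<in>R. lin (Lr r)" and linQ: "\<forall>q\<in>Q. lin (Lq q)" and linT: "\<forall>i. lin (Tp i)"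
  shows "has_ext_with_ineqs D ((\<lambda>y. \<lambda>i. if i \<in> D then Tp i y + t i else 0) `
     {y. (\<forall>j. j \<notin> J \<longrightarrow> y j = 0) \<and> (\<forall>r\<in>R. Lr r y \<le> br r) \<and> (\<forall>q\<in>Q. Lq q y = eq q)}) (card R)"
proof -
  obtain f where f: "bij_betw f {0..<card J} J" using ex_bij_betw_nat_finite[OF finJ] by blast
  obtain g where g: "bij_betw g {0..<card R} R" using ex_bij_betw_nat_finite[OF finR] by blast
  obtain h where h: "bij_betw h {0..<card Q} Q" using ex_bij_betw_nat_finite[OF finQ] by blast
  define d' where "d' = card J"
  define A where "A r j = Lr (g r) (dlt (f j))" for r j
  define b where "b r = br (g r)" for r
  define C where "C q j = Lq (h q) (dlt (f j))" for q j
  define e where "e q = eq (h q)" for q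
  define T where "T i j = Tp i (dlt (f j))" for i j
  define FN where "FN = {y::nat \<Rightarrow> real. (\<forall>j\<ge>d'. y j = 0) \<and>
             (\<forall>r<card R. (\<Sum>j<d'. A r j * y j) \<le> b r) \<and>
             (\<forall>r<card Q. (\<Sum>j<d'. C r j * y j) = e r)}"
  define FJ where "FJ = {y. (\<forall>j. j \<notin> J \<longrightarrow> y j = 0) \<and> (\<forall>r\<in>R. Lr r y \<le> br r) \<and> (\<forall>q\<in>Q. Lq q y = eq q)}"
  define pN where "pN = (\<lambda>y::nat \<Rightarrow> real. \<lambda>i. if i \<in> D then (\<Sum>j<d'. T i j * y j) + t i else 0)"
  define pJ where "pJ = (\<lambda>y. \<lambda>i. if i \<in> D then Tp i y + t i else 0)"
  define toY where "toY y = (\<lambda>x. if x \<in> J then y (inv_into {0..<card J} f x) else 0)" for y :: "nat \<Rightarrow> real"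
  define fromY where "fromY Y = (\<lambda>k. if k < card J then Y (f k) else 0)" for Y :: "'j \<Rightarrow> real"
  have inv: "inv_into {0..<card J} f (f k) = k" if "k < card J" for k
    using f that by (simp add: bij_betw_def inv_into_f_f)
  have toY0: "\<forall>j. j \<notin> J \<longrightarrow> toY y j = 0" for y unfolding toY_def by simp
  have toYf: "toY y (f k) = y k" if "k < card J" for y k
    using that inv f unfolding toY_def by (auto simp: bij_betw_def)
  have key: "(\<Sum>k<card J. L (dlt (f k)) * y k) = L (toY y)" if "lin L" for L y
  proof -
    have "(\<Sum>k<card J. L (dlt (f k)) * y k) = (\<Sum>k<card J. L (dlt (f k)) * toY y (f k))"
      using toYf by (intro sum.cong) auto
    also have "\<dots> = L (toY y)" by (rule reindex_lin[OF finJ that f toY0])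
    finally show ?thesis .
  qed
  have key2: "(\<Sum>k<card J. L (dlt (f k)) * fromY Y k) = L Y" if "lin L" "\<forall>j. j \<notin> J \<longrightarrow> Y j = 0" for L Y
  proof -
    have "(\<Sum>k<card J. L (dlt (f k)) * fromY Y k) = (\<Sum>k<card J. L (dlt (f k)) * Y (f k))"
      unfolding fromY_def by (intro sum.cong) auto
    also have "\<dots> = L Y" by (rule reindex_lin[OF finJ that(1) f that(2)])
    finally show ?thesis .
  qed
  have toYfrom: "toY (fromY Y) = Y" if "\<forall>j. j \<notin> J \<longrightarrow> Y j = 0" for Y
  proof
    fix x show "toY (fromY Y) x = Y x"
    proof (cases "x \<in> J")
      case True
      have "inv_into {0..<card J} f x \<in> {0..<card J}" using f True
        by (metis bij_betw_imp_surj_on inv_into_into)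
      moreover have "f (inv_into {0..<card J} f x) = x" using f True
        by (meson bij_betw_inv_into_right)
      ultimately show ?thesis using True unfolding toY_def fromY_def by auto
    next
      case False then show ?thesis using that unfolding toY_def by simp
    qed
  qed
  have gR: "(\<forall>r<card R. P (g r)) \<longleftrightarrow> (\<forall>r\<in>R. P r)" for P
  proof
    assume a: "\<forall>r<card R. P (g r)"
    show "\<forall>r\<in>R. P r"
    proof
      fix r assume "r \<in> R"
      then obtain k where "k < card R" "r = g k" using g unfolding bij_betw_def by (auto simp: atLeast0LessThan)
      then show "P r" using a by simp
    qed
  next
    assume a: "\<forall>r\<in>R. P r"
    show "\<forall>r<card R. P (g r)" using a g unfolding bij_betw_def by (auto simp: atLeast0LessThan)
  qed
  have hQ: "(\<forall>r<card Q. P (h r)) \<longleftrightarrow> (\<forall>r\<in>Q. P r)" for P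
  proof
    assume a: "\<forall>r<card Q. P (h r)"
    show "\<forall>r\<in>Q. P r"
    proof
      fix r assume "r \<in> Q"
      then obtain k where "k < card Q" "r = h k" using h unfolding bij_betw_def by (auto simp: atLeast0LessThan)
      then show "P r" using a by simp
    qed
  next
    assume a: "\<forall>r\<in>Q. P r"
    show "\<forall>r<card Q. P (h r)" using a h unfolding bij_betw_def by (auto simp: atLeast0LessThan)
  qed
  have gin: "g r \<in> R" if "r < card R" for r using g that unfolding bij_betw_def by auto
  have hin: "h r \<in> Q" if "r < card Q" for r using h that unfolding bij_betw_def by auto
  have "pN ` FN = pJ ` FJ"
  proof
    show "pN ` FN \<subseteq> pJ ` FJ"
    proof
      fix x assume "x \<in> pN ` FN"
      then obtain y where y: "y \<in> FN" "x = pN y" by blast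
      have "\<forall>r<card R. Lr (g r) (toY y) \<le> br (g r)"
      proof (intro allI impI)
        fix r assume r: "r < card R"
        have "(\<Sum>j<card J. Lr (g r) (dlt (f j)) * y j) \<le> br (g r)"
          using y(1) r unfolding FN_def A_def b_def d'_def by auto
        then show "Lr (g r) (toY y) \<le> br (g r)" using key linR gin[OF r] by simp
      qed
      moreover have "\<forall>r<card Q. Lq (h r) (toY y) = eq (h r)"
      proof (intro allI impI)
        fix r assume r: "r < card Q"
        have "(\<Sum>j<card J. Lq (h r) (dlt (f j)) * y j) = eq (h r)"
          using y(1) r unfolding FN_def C_def e_def d'_def by auto
        then show "Lq (h r) (toY y) = eq (h r)" using key linQ hin[OF r] by simp
      qed
      ultimately have "toY y \<in> FJ"
        unfolding FJ_def using toY0 gR[where P="\<lambda>r. Lr r (toY y) \<le> br r"] hQ[where P="\<lambda>r. Lq r (toY y) = eq r"]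
        by auto
      moreover have "pN y = pJ (toY y)"
        unfolding pN_def pJ_def T_def d'_def using key linT by auto
      ultimately show "x \<in> pJ ` FJ" using y by blast
    qed
  next
    show "pJ ` FJ \<subseteq> pN ` FN"
    proof
      fix x assume "x \<in> pJ ` FJ"
      then obtain Y where Y: "Y \<in> FJ" "x = pJ Y" by blast
      have Y0: "\<forall>j. j \<notin> J \<longrightarrow> Y j = 0" using Y(1) unfolding FJ_def by blast
      have tY: "toY (fromY Y) = Y" using toYfrom[OF Y0] .
      have "\<forall>r<card R. (\<Sum>j<card J. Lr (g r) (dlt (f j)) * fromY Y j) \<le> br (g r)"
      proof (intro allI impI)
        fix r assume r: "r < card R"
        have "Lr (g r) Y \<le> br (g r)" using Y(1) gin[OF r] unfolding FJ_def by auto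
        then show "(\<Sum>j<card J. Lr (g r) (dlt (f j)) * fromY Y j) \<le> br (g r)"
          using key2[OF _ Y0] linR gin[OF r] by simp
      qed
      moreover have "\<forall>r<card Q. (\<Sum>j<card J. Lq (h r) (dlt (f j)) * fromY Y j) = eq (h r)"
      proof (intro allI impI)
        fix r assume r: "r < card Q"
        have "Lq (h r) Y = eq (h r)" using Y(1) hin[OF r] unfolding FJ_def by auto
        then show "(\<Sum>j<card J. Lq (h r) (dlt (f j)) * fromY Y j) = eq (h r)"
          using key2[OF _ Y0] linQ hin[OF r] by simp
      qed
      ultimately have "fromY Y \<in> FN"
        unfolding FN_def A_def b_def C_def e_def d'_def by (auto simp: fromY_def)
      moreover have "pJ Y = pN (fromY Y)"
        unfolding pN_def pJ_def T_def d'_def using key linT tY by auto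
      ultimately show "x \<in> pN ` FN" using Y by blast
    qed
  qed
  then have "(\<lambda>y. \<lambda>i. if i \<in> D then (\<Sum>j<d'. T i j * y j) + t i else 0) ` FN = pJ ` FJ"
    unfolding pN_def .
  then show ?thesis unfolding has_ext_with_ineqs_def FN_def FJ_def pJ_def by blast
qed

lemma lin_comb: "lin L \<Longrightarrow> L (\<lambda>j. t * y1 j + (1 - t) * y2 j) = t * L y1 + (1 - t) * L y2"
proof -
  assume L: "lin L"
  have A: "\<forall>x y. L (\<lambda>j. x j + y j) = L x + L y" using L unfolding lin_def by blast
  have "L (\<lambda>j. t * y1 j + (1 - t) * y2 j) = L (\<lambda>j. t * y1 j) + L (\<lambda>j. (1 - t) * y2 j)"
    using A[rule_format, of "\<lambda>j. t * y1 j" "\<lambda>j. (1 - t) * y2 j"] by simp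
  also have "L (\<lambda>j. t * y1 j) = t * L y1" using L unfolding lin_def by blast
  also have "L (\<lambda>j. (1 - t) * y2 j) = (1 - t) * L y2" using L unfolding lin_def by blast
  finally show ?thesis .
qed

lemma lin_sum: "finite S \<Longrightarrow> lin (\<lambda>y. \<Sum>k\<in>S. y (f k))"
  unfolding lin_def by (simp add: sum.distrib sum_distrib_left)

lemma lin_coord: "lin (\<lambda>y. y a)"
  unfolding lin_def by simp

lemma lin_neg: "lin L \<Longrightarrow> lin (\<lambda>y. - L y)"
  unfolding lin_def by simp

lemma lin_diff: "lin L1 \<Longrightarrow> lin L2 \<Longrightarrow> lin (\<lambda>y. L1 y - L2 y)"
  unfolding lin_def by (simp add: algebra_simps)

lemma lin_zero_fun: "lin (\<lambda>y. 0)"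
  unfolding lin_def by simp

definition LR :: "'a set set \<Rightarrow> nat \<times> ('a set + 'a) option \<Rightarrow> (nat \<times> 'a set option \<Rightarrow> real) \<Rightarrow> real" where
  "LR E r y = (case r of (a, None) \<Rightarrow> - y (a, None)
     | (a, Some (Inl e)) \<Rightarrow> - y (a, Some e)
     | (a, Some (Inr v)) \<Rightarrow> (\<Sum>e\<in>{e\<in>E. v \<in> e}. y (a, Some e)) - y (a, None))"

definition LQ :: "(nat \<Rightarrow> 'a set) \<Rightarrow> nat \<Rightarrow> (nat \<times> 'a set) option \<Rightarrow> (nat \<times> 'a set option \<Rightarrow> real) \<Rightarrow> real" where
  "LQ fam N q y = (case q of None \<Rightarrow> (\<Sum>a<N. y (a, None))
     | Some (a, e) \<Rightarrow> (if crossing (fam a) e then 0 else y (a, Some e)))"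

definition EQ :: "(nat \<times> 'a set) option \<Rightarrow> real" where
  "EQ q = (case q of None \<Rightarrow> 1 | Some _ \<Rightarrow> 0)"

definition TP :: "nat \<Rightarrow> 'a set \<Rightarrow> (nat \<times> 'a set option \<Rightarrow> real) \<Rightarrow> real" where
  "TP N i y = (\<Sum>a<N. y (a, Some i))"

lemma lin_LR: "finite E \<Longrightarrow> lin (LR E r)"
proof -
  assume fE: "finite E"
  obtain a ro where r: "r = (a, ro)" by (cases r)
  show ?thesis
  proof (cases ro)
    case None
    then show ?thesis unfolding r LR_def by (simp add: lin_neg lin_coord)
  next
    case (Some s)
    show ?thesis
    proof (cases s)
      case (Inl e)
      then show ?thesis unfolding r LR_def Some by (simp add: lin_neg lin_coord)
    next
      case (Inr v)
      have "lin (\<lambda>y. (\<Sum>e\<in>{e\<in>E. v \<in> e}. y (a, Some e)) - y (a, None))"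
        by (rule lin_diff[OF lin_sum lin_coord]) (use fE in simp)
      then show ?thesis unfolding r LR_def Some Inr by simp
    qed
  qed
qed

lemma lin_LQ: "lin (LQ fam N q)"
proof (cases q)
  case None
  then show ?thesis unfolding LQ_def by (simp add: lin_sum)
next
  case (Some p)
  obtain a e where p: "p = (a, e)" by (cases p)
  show ?thesis unfolding LQ_def Some p
    by (cases "crossing (fam a) e") (simp_all add: lin_coord lin_zero_fun)
qed

lemma lin_TP: "lin (TP N i)"
  unfolding TP_def by (simp add: lin_sum)


lemma simple_graph_facts:
  assumes "simple_graph V E"
  shows "finite V" "finite E" "\<forall>e\<in>E. \<exists>u v. u \<in> V \<and> v \<in> V \<and> u \<noteq> v \<and> e = {u, v}"
proof -
  show fV: "finite V" using assms unfolding simple_graph_def by blast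
  show ed: "\<forall>e\<in>E. \<exists>u v. u \<in> V \<and> v \<in> V \<and> u \<noteq> v \<and> e = {u, v}" using assms unfolding simple_graph_def by blast
  have "E \<subseteq> Pow V" using ed by auto
  then show "finite E" using fV by (meson finite_Pow_iff finite_subset)
qed

lemma matching_count_le1:
  assumes M: "is_matching E M" and "finite S" "\<forall>e\<in>S. v \<in> e"
  shows "(\<Sum>e\<in>S. indicator M e :: real) \<le> 1"
proof (cases "\<exists>e0\<in>S. e0 \<in> M")
  case False
  then have "(\<Sum>e\<in>S. indicator M e :: real) = 0" by (intro sum.neutral) (auto simp: indicator_def)
  then show ?thesis by simp
next
  case True
  then obtain e0 where e0: "e0 \<in> S" "e0 \<in> M" by blast
  have z: "indicator M e = (0::real)" if "e \<in> S - {e0}" for e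
  proof (rule ccontr)
    assume "indicator M e \<noteq> (0::real)"
    then have "e \<in> M" by (auto simp: indicator_def split: if_splits)
    moreover have "v \<in> e" "v \<in> e0" "e \<noteq> e0" using that e0 \<open>\<forall>e\<in>S. v \<in> e\<close> by auto
    ultimately show False using M e0 unfolding is_matching_def by blast
  qed
  have "(\<Sum>e\<in>S. indicator M e :: real) = indicator M e0 + (\<Sum>e\<in>S - {e0}. indicator M e)"
    using e0 \<open>finite S\<close> by (simp add: sum.remove)
  also have "(\<Sum>e\<in>S - {e0}. indicator M e :: real) = 0" using z by (intro sum.neutral) auto
  finally show ?thesis by (simp add: indicator_def)
qed

lemma ext_from_cover:
  fixes V :: "'a set" and E :: "'a set set" and fam :: "nat \<Rightarrow> 'a set" and N :: nat
  assumes sg: "simple_graph V E"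
    and cover: "\<forall>M. is_matching E M \<longrightarrow> (\<exists>a<N. \<forall>e\<in>M. crossing (fam a) e)"
  shows "has_ext_with_ineqs E (matching_polytope E) (N * (card E + card V + 1))"
proof -
  have finV: "finite V" and finE: "finite E"
    and edges: "\<forall>e\<in>E. \<exists>u v. u \<in> V \<and> v \<in> V \<and> u \<noteq> v \<and> e = {u, v}"
    using simple_graph_facts[OF sg] by auto
  define J :: "(nat \<times> 'a set option) set" where "J = {..<N} \<times> insert None (Some ` E)"
  define R :: "(nat \<times> ('a set + 'a) option) set" where "R = {..<N} \<times> insert None (Some ` (Inl ` E \<union> Inr ` V))"
  define Q :: "(nat \<times> 'a set) option set" where "Q = insert None (Some ` ({..<N} \<times> E))"
  have finJ: "finite J" unfolding J_def using finE by simp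
  have finR: "finite R" unfolding R_def using finE finV by simp
  have finQ: "finite Q" unfolding Q_def using finE by simp
  have cardR: "card R = N * (card E + card V + 1)"
  proof -
    have c1: "card (Inl ` E \<union> Inr ` V :: ('a set + 'a) set) = card E + card V"
      using finE finV by (subst card_Un_disjoint) (auto simp: card_image)
    have "card (insert None (Some ` (Inl ` E \<union> Inr ` V))) = card E + card V + 1"
      using finE finV c1 by (simp add: card_image)
    then show ?thesis unfolding R_def by (simp add: card_cartesian_product)
  qed
  define FJ where "FJ = {y. (\<forall>j. j \<notin> J \<longrightarrow> y j = 0) \<and> (\<forall>r\<in>R. LR E r y \<le> (\<lambda>_. 0) r) \<and> (\<forall>q\<in>Q. LQ fam N q y = EQ q)}"
  define proj where "proj = (\<lambda>y. \<lambda>i. if i \<in> E then TP N i y + (\<lambda>_. 0::real) i else 0)"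
  have H: "has_ext_with_ineqs E (proj ` FJ) (card R)"
    unfolding proj_def FJ_def
    by (rule ext_general[where Lr="LR E" and br="\<lambda>_. 0" and Lq="LQ fam N" and eq=EQ and Tp="TP N"
          and t="\<lambda>_. 0" and D=E, OF finJ finR finQ])
       (auto simp: lin_LR[OF finE] lin_LQ lin_TP)
  have inR1: "(a, None) \<in> R" if "a < N" for a unfolding R_def using that by auto
  have inR2: "(a, Some (Inl e)) \<in> R" if "a < N" "e \<in> E" for a e unfolding R_def using that by auto
  have inR3: "(a, Some (Inr v)) \<in> R" if "a < N" "v \<in> V" for a v unfolding R_def using that by auto
  have inQ1: "None \<in> Q" unfolding Q_def by auto
  have inQ2: "Some (a, e) \<in> Q" if "a < N" "e \<in> E" for a e unfolding Q_def using that by auto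
  have F0: "y (a, None) \<ge> 0" if "y \<in> FJ" "a < N" for y a
    using that inR1[of a] unfolding FJ_def LR_def by fastforce
  have F1: "y (a, Some e) \<ge> 0" if "y \<in> FJ" "a < N" "e \<in> E" for y a e
    using that inR2[of a e] unfolding FJ_def LR_def by fastforce
  have F2: "(\<Sum>e\<in>{e\<in>E. v \<in> e}. y (a, Some e)) \<le> y (a, None)" if "y \<in> FJ" "a < N" "v \<in> V" for y a v
    using that inR3[of a v] unfolding FJ_def LR_def by fastforce
  have F3: "(\<Sum>a<N. y (a, None)) = 1" if "y \<in> FJ" for y
    using that inQ1 unfolding FJ_def LQ_def EQ_def by fastforce
  have F4: "y (a, Some e) = 0" if "y \<in> FJ" "a < N" "e \<in> E" "\<not> crossing (fam a) e" for y a e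
    using that inQ2[of a e] unfolding FJ_def LQ_def EQ_def by fastforce
  have F5: "y (a, Some e) = 0" if h: "y \<in> FJ" "a < N" "e \<in> E" "y (a, None) = 0" for y a e
  proof -
    obtain u v where uv: "u \<in> V" "e = {u, v}" using edges h(3) by blast
    have "y (a, Some e) \<le> (\<Sum>e\<in>{e\<in>E. u \<in> e}. y (a, Some e))"
      by (rule member_le_sum) (use h uv finE F1 in auto)
    also have "\<dots> \<le> 0" using F2[OF h(1,2) uv(1)] h(4) by simp
    finally show ?thesis using F1[OF h(1-3)] by simp
  qed
  define MS :: "('a set \<Rightarrow> real) set" where "MS = {indicator M | M. is_matching E M}"
  have mp: "matching_polytope E = conv_hull_fun MS" unfolding matching_polytope_def MS_def by simp
  have sub: "proj ` FJ \<subseteq> conv_hull_fun MS"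
  proof
    fix x assume "x \<in> proj ` FJ"
    then obtain y where y: "y \<in> FJ" "x = proj y" by blast
    define lam where "lam a = y (a, None)" for a
    define z where "z a = (if lam a > 0 then (\<lambda>e. if e \<in> E then y (a, Some e) / lam a else 0) else (\<lambda>_. 0))" for a
    have zin: "z a \<in> conv_hull_fun MS" if a: "a < N" for a
    proof (cases "lam a > 0")
      case False
      have "is_matching E {}" unfolding is_matching_def by simp
      then have "indicator {} \<in> MS" unfolding MS_def by (intro CollectI exI[of _ "{}"]) simp
      then have i0: "indicator {} \<in> conv_hull_fun MS" by (rule subsetD[OF conv_hull_fun_base])
      have "z a = indicator {}" using False unfolding z_def by (auto simp: indicator_def)
      then show ?thesis using i0 by simp
    next
      case True
      define Fa where "Fa = {e\<in>E. crossing (fam a) e}"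
      have finFa: "finite Fa" using finE unfolding Fa_def by simp
      have crFa: "\<forall>e\<in>Fa. crossing (fam a) e" unfolding Fa_def by simp
      have za: "z a = (\<lambda>e. if e \<in> E then y (a, Some e) / lam a else 0)" using True unfolding z_def by simp
      have "feas Fa (z a)" unfolding feas_def
      proof (intro conjI allI impI ballI)
        fix e assume "e \<notin> Fa"
        then show "z a e = 0" unfolding za Fa_def using F4[OF y(1) a] by auto
      next
        fix e assume "e \<in> Fa"
        then show "0 \<le> z a e" unfolding za Fa_def using F1[OF y(1) a] True by auto
      next
        fix v
        show "(\<Sum>e\<in>{e\<in>Fa. v \<in> e}. z a e) \<le> 1"
        proof (cases "v \<in> V")
          case True
          have "(\<Sum>e\<in>{e\<in>Fa. v \<in> e}. z a e) = (\<Sum>e\<in>{e\<in>Fa. v \<in> e}. y (a, Some e)) / lam a"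
            unfolding za Fa_def by (simp add: sum_divide_distrib)
          also have "(\<Sum>e\<in>{e\<in>Fa. v \<in> e}. y (a, Some e)) \<le> (\<Sum>e\<in>{e\<in>E. v \<in> e}. y (a, Some e))"
            by (rule sum_mono2) (use finE F1[OF y(1) a] in \<open>auto simp: Fa_def\<close>)
          also have "\<dots> \<le> lam a" using F2[OF y(1) a True] unfolding lam_def .
          finally show ?thesis using \<open>lam a > 0\<close> by (simp add: divide_right_mono)
        next
          case False
          have "{e\<in>Fa. v \<in> e} = {}" using False edges unfolding Fa_def by auto
          then have "(\<Sum>e\<in>{e\<in>Fa. v \<in> e}. z a e) = 0" by (simp only: sum.empty)
          then show ?thesis by simp
        qed
      qed
      then have zc: "z a \<in> conv_hull_fun (matchings_in Fa)" by (rule bip_integral[OF finFa crFa])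
      have msub: "matchings_in Fa \<subseteq> MS"
      proof
        fix x assume "x \<in> matchings_in Fa"
        then obtain M where "x = indicator M" "M \<subseteq> Fa" "\<forall>e1\<in>M. \<forall>e2\<in>M. e1 \<noteq> e2 \<longrightarrow> e1 \<inter> e2 = {}"
          unfolding matchings_in_def by auto
        moreover have "Fa \<subseteq> E" unfolding Fa_def by auto
        ultimately have "is_matching E M" "x = indicator M" unfolding is_matching_def by auto
        then show "x \<in> MS" unfolding MS_def by (intro CollectI exI[of _ M]) simp
      qed
      show ?thesis by (rule subsetD[OF conv_hull_fun_mono[OF msub] zc])
    qed
    have c1: "\<forall>a<N. 0 \<le> lam a \<and> z a \<in> conv_hull_fun MS" using zin F0[OF y(1)] unfolding lam_def by auto
    have c2: "(\<Sum>a<N. lam a) = 1" using F3[OF y(1)] unfolding lam_def .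
    have "(\<lambda>j. \<Sum>a<N. lam a * z a j) \<in> conv_hull_fun MS"
      by (rule conv_hull_fun_comb[OF c1 c2])
    moreover have "x = (\<lambda>j. \<Sum>a<N. lam a * z a j)"
    proof
      fix j
      show "x j = (\<Sum>a<N. lam a * z a j)"
      proof (cases "j \<in> E")
        case True
        have "x j = (\<Sum>a<N. y (a, Some j))" unfolding y(2) proj_def TP_def using True by simp
        also have "\<dots> = (\<Sum>a<N. lam a * z a j)"
        proof (rule sum.cong)
          fix a assume "a \<in> {..<N}"
          then have a: "a < N" by simp
          show "y (a, Some j) = lam a * z a j"
          proof (cases "lam a > 0")
            case True then show ?thesis unfolding z_def using \<open>j \<in> E\<close> by simp
          next
            case False
            then have "lam a = 0" using F0[OF y(1) a] unfolding lam_def by simp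
            then show ?thesis using F5[OF y(1) a \<open>j \<in> E\<close>] unfolding lam_def by simp
          qed
        qed simp
        finally show ?thesis .
      next
        case False
        then have "\<forall>a. z a j = 0" unfolding z_def by simp
        then show ?thesis unfolding y(2) proj_def using False by simp
      qed
    qed
    ultimately show "x \<in> conv_hull_fun MS" by simp
  qed
  have conv_img: "fconvex (proj ` FJ)"
    unfolding fconvex_def
  proof (intro ballI allI impI)
    fix x1 x2 and t :: real
    assume x1: "x1 \<in> proj ` FJ" and x2: "x2 \<in> proj ` FJ" and t: "0 \<le> t \<and> t \<le> 1"
    obtain y1 where y1: "y1 \<in> FJ" "x1 = proj y1" using x1 by blast
    obtain y2 where y2: "y2 \<in> FJ" "x2 = proj y2" using x2 by blast
    define y where "y j = t * y1 j + (1 - t) * y2 j" for j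
    have "y \<in> FJ"
      unfolding FJ_def
    proof (intro CollectI conjI allI impI ballI)
      fix j assume "j \<notin> J"
      have a1: "\<forall>j. j \<notin> J \<longrightarrow> y1 j = 0" using y1(1) unfolding FJ_def by blast
      have a2: "\<forall>j. j \<notin> J \<longrightarrow> y2 j = 0" using y2(1) unfolding FJ_def by blast
      have "y1 j = 0" "y2 j = 0" using a1 a2 \<open>j \<notin> J\<close> by blast+
      then show "y j = 0" unfolding y_def by simp
    next
      fix r assume r: "r \<in> R"
      have "LR E r y = t * LR E r y1 + (1 - t) * LR E r y2"
        unfolding y_def by (rule lin_comb[OF lin_LR[OF finE]])
      moreover have "LR E r y1 \<le> 0" "LR E r y2 \<le> 0" using y1(1) y2(1) r unfolding FJ_def by auto
      ultimately show "LR E r y \<le> (\<lambda>_. 0) r" using t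
        by (simp add: add_nonpos_nonpos mult_nonneg_nonpos)
    next
      fix q assume q: "q \<in> Q"
      have "LQ fam N q y = t * LQ fam N q y1 + (1 - t) * LQ fam N q y2"
        unfolding y_def by (rule lin_comb[OF lin_LQ])
      moreover have "LQ fam N q y1 = EQ q" "LQ fam N q y2 = EQ q" using y1(1) y2(1) q unfolding FJ_def by auto
      ultimately show "LQ fam N q y = EQ q" by (simp add: algebra_simps)
    qed
    moreover have "proj y = (\<lambda>j. t * x1 j + (1 - t) * x2 j)"
    proof
      fix i
      have "TP N i y = t * TP N i y1 + (1 - t) * TP N i y2"
        unfolding y_def by (rule lin_comb[OF lin_TP])
      then show "proj y i = t * x1 i + (1 - t) * x2 i"
        unfolding y1(2) y2(2) proj_def by simp
    qed
    ultimately show "(\<lambda>j. t * x1 j + (1 - t) * x2 j) \<in> proj ` FJ" by (intro image_eqI[where x=y]) simp_all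
  qed
  have base: "MS \<subseteq> proj ` FJ"
  proof
    fix x assume "x \<in> MS"
    then obtain M where M: "is_matching E M" "x = indicator M" unfolding MS_def by auto
    have ME: "M \<subseteq> E" using M(1) unfolding is_matching_def by blast
    obtain a0 where a0: "a0 < N" "\<forall>e\<in>M. crossing (fam a0) e" using cover M(1) by blast
    define y :: "nat \<times> 'a set option \<Rightarrow> real" where
      "y p = (if fst p = a0 then (case snd p of None \<Rightarrow> 1 | Some e \<Rightarrow> indicator M e) else 0)" for p
    have "y \<in> FJ"
      unfolding FJ_def
    proof (intro CollectI conjI allI impI ballI)
      fix j assume j: "j \<notin> J"
      obtain a o' where jj: "j = (a, o')" by (cases j)
      show "y j = 0"
      proof (cases "a = a0")
        case True
        then obtain e where "o' = Some e" "e \<notin> E" using j a0 unfolding jj J_def by (cases o') auto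
        then show ?thesis using ME unfolding y_def jj by (auto simp: indicator_def)
      next
        case False then show ?thesis unfolding y_def jj by simp
      qed
    next
      fix r assume r: "r \<in> R"
      obtain a ro where rr: "r = (a, ro)" by (cases r)
      show "LR E r y \<le> (\<lambda>_. 0) r"
      proof (cases ro)
        case None then show ?thesis unfolding rr LR_def y_def by simp
      next
        case (Some s)
        show ?thesis
        proof (cases s)
          case (Inl e) then show ?thesis unfolding rr LR_def y_def Some by (simp add: indicator_def)
        next
          case (Inr v)
          show ?thesis
          proof (cases "a = a0")
            case False then show ?thesis unfolding rr LR_def y_def Some Inr by simp
          next
            case True
            have "(\<Sum>e\<in>{e\<in>E. v \<in> e}. indicator M e :: real) \<le> 1"
              by (rule matching_count_le1[OF M(1)]) (use finE in auto)
            then show ?thesis unfolding rr LR_def y_def Some Inr using True by simp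
          qed
        qed
      qed
    next
      fix q assume q: "q \<in> Q"
      show "LQ fam N q y = EQ q"
      proof (cases q)
        case None
        have "(\<Sum>a<N. y (a, None)) = (\<Sum>a<N. if a = a0 then 1 else 0)" unfolding y_def by simp
        also have "\<dots> = 1" using a0 by simp
        finally show ?thesis unfolding None LQ_def EQ_def by simp
      next
        case (Some p)
        obtain a e where p: "p = (a, e)" by (cases p)
        show ?thesis
        proof (cases "crossing (fam a) e")
          case True then show ?thesis unfolding Some p LQ_def EQ_def by simp
        next
          case False
          have "y (a, Some e) = 0"
          proof (cases "a = a0")
            case True
            then have "e \<notin> M" using a0 False by blast
            then show ?thesis unfolding y_def using True by simp
          next
            case False then show ?thesis unfolding y_def by simp
          qed
          then show ?thesis unfolding Some p LQ_def EQ_def using False by simp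
        qed
      qed
    qed
    moreover have "proj y = x"
    proof
      fix i
      show "proj y i = x i"
      proof (cases "i \<in> E")
        case True
        have "(\<Sum>a<N. y (a, Some i)) = (\<Sum>a<N. if a = a0 then indicator M i else 0)"
          unfolding y_def by (intro sum.cong) auto
        also have "\<dots> = indicator M i" using a0 by simp
        finally show ?thesis unfolding proj_def TP_def M(2) using True by simp
      next
        case False
        then show ?thesis unfolding proj_def M(2) using ME by (auto simp: indicator_def)
      qed
    qed
    ultimately show "x \<in> proj ` FJ" by (intro image_eqI[where x=y]) simp_all
  qed
  have "proj ` FJ = matching_polytope E"
    unfolding mp using sub conv_hull_fun_least[OF conv_img base] by blast
  then show ?thesis using H cardR by simp
qed

lemma edge_card2:
  assumes sg: "simple_graph V E" and e: "e \<in> E"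
  shows "card e = 2" "e \<subseteq> V"
proof -
  obtain u v where "u \<in> V" "v \<in> V" "u \<noteq> v" "e = {u, v}"
    using simple_graph_facts(3)[OF sg] e by blast
  then show "card e = 2" "e \<subseteq> V" by auto
qed

lemma matching_size:
  assumes sg: "simple_graph V E" and M: "is_matching E M"
  shows "2 * card M \<le> card V"
proof -
  have ME: "M \<subseteq> E" using M unfolding is_matching_def by blast
  have finE: "finite E" using simple_graph_facts[OF sg] by blast
  have finV: "finite V" using simple_graph_facts[OF sg] by blast
  have finM: "finite M" using finite_subset[OF ME finE] .
  have dj: "disjoint M" unfolding disjoint_def using M unfolding is_matching_def
    by (auto simp: disjnt_def)
  have "card (\<Union>M) = sum card M"
  proof (rule card_Union_disjoint[OF dj])
    fix A assume "A \<in> M"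
    then have "card A = 2" using ME edge_card2[OF sg] by auto
    then show "finite A" by (intro card_ge_0_finite) simp
  qed
  also have "\<dots> = sum (\<lambda>_. 2) M" using ME edge_card2[OF sg] by (intro sum.cong) auto
  also have "\<dots> = 2 * card M" by simp
  finally have "card (\<Union>M) = 2 * card M" .
  moreover have "\<Union>M \<subseteq> V" using ME edge_card2[OF sg] by auto
  ultimately show ?thesis using card_mono[OF finV] by metis
qed

lemma covers_count:
  assumes sg: "simple_graph V E" and M: "is_matching E M"
  shows "2 ^ (card V - card M) \<le> card {A \<in> Pow V. \<forall>e\<in>M. crossing A e}"
proof -
  have ME: "M \<subseteq> E" using M unfolding is_matching_def by blast
  have finE: "finite E" and finV: "finite V"
    and edges: "\<forall>e\<in>E. \<exists>u v. u \<in> V \<and> v \<in> V \<and> u \<noteq> v \<and> e = {u, v}"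
    using simple_graph_facts[OF sg] by auto
  have finM: "finite M" using finite_subset[OF ME finE] .
  define pr where "pr e = (SOME p. e = {fst p, snd p} \<and> fst p \<noteq> snd p \<and> fst p \<in> V \<and> snd p \<in> V)" for e
  define r where "r e = fst (pr e)" for e
  define r' where "r' e = snd (pr e)" for e
  have rr: "e = {r e, r' e}" "r e \<noteq> r' e" "r e \<in> V" "r' e \<in> V" "r e \<in> e" "r' e \<in> e" if eM: "e \<in> M" for e
  proof -
    have eE: "e \<in> E" using ME eM by blast
    obtain u v where uv: "u \<in> V" "v \<in> V" "u \<noteq> v" "e = {u, v}" using edges eE by blast
    let ?P = "\<lambda>p. e = {fst p, snd p} \<and> fst p \<noteq> snd p \<and> fst p \<in> V \<and> snd p \<in> V"
    have "?P (u, v)" using uv by simp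
    then have "?P (SOME p. ?P p)" by (rule someI)
    then have P: "?P (pr e)" unfolding pr_def .
    obtain a b where ab: "pr e = (a, b)" by (cases "pr e")
    have rab: "r e = a" "r' e = b" unfolding r_def r'_def ab by simp_all
    have "e = {a, b}" "a \<noteq> b" "a \<in> V" "b \<in> V" using P unfolding ab by simp_all
    then show "e = {r e, r' e}" "r e \<noteq> r' e" "r e \<in> V" "r' e \<in> V" "r e \<in> e" "r' e \<in> e"
      unfolding rab by simp_all
  qed
  have disj: "e1 = e2" if "e1 \<in> M" "e2 \<in> M" "x \<in> e1" "x \<in> e2" for e1 e2 x
    using M that unfolding is_matching_def by blast
  define R' where "R' = r' ` M"
  have injr': "inj_on r' M"
  proof (rule inj_onI)
    fix e1 e2 assume h: "e1 \<in> M" "e2 \<in> M" "r' e1 = r' e2"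
    have "r' e1 \<in> e1" using rr(6)[OF h(1)] .
    moreover have "r' e1 \<in> e2" using rr(6)[OF h(2)] h(3) by simp
    ultimately show "e1 = e2" using disj h(1,2) by blast
  qed
  have cardR': "card R' = card M" unfolding R'_def using card_image[OF injr'] .
  have R'V: "R' \<subseteq> V" unfolding R'_def using rr(4) by blast
  define phi where "phi B = B \<union> {r' e | e. e \<in> M \<and> r e \<notin> B}" for B
  have phi_sub: "phi B \<in> {A \<in> Pow V. \<forall>e\<in>M. crossing A e}" if B: "B \<in> Pow (V - R')" for B
  proof -
    have BV: "B \<subseteq> V" "B \<inter> R' = {}" using B by auto
    have "{r' e | e. e \<in> M \<and> r e \<notin> B} \<subseteq> V" using rr(4) by blast
    then have "phi B \<subseteq> V" unfolding phi_def using BV by blast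
    moreover have "crossing (phi B) e" if e: "e \<in> M" for e
    proof (cases "r e \<in> B")
      case True
      have "r' e \<in> R'" unfolding R'_def using e by blast
      then have "r' e \<notin> B" using BV by blast
      moreover have "r' e \<notin> {r' e' | e'. e' \<in> M \<and> r e' \<notin> B}"
      proof
        assume "r' e \<in> {r' e' | e'. e' \<in> M \<and> r e' \<notin> B}"
        then obtain e' where e': "e' \<in> M" "r e' \<notin> B" "r' e = r' e'" by blast
        then have "e' = e" using inj_onD[OF injr' e'(3)[symmetric] e'(1) e] by simp
        then show False using True e'(2) by simp
      qed
      ultimately have "r' e \<notin> phi B" unfolding phi_def by blast
      moreover have "r e \<in> phi B" unfolding phi_def using True by blast
      ultimately show ?thesis unfolding crossing_def
        by (intro exI[of _ "r e"] exI[of _ "r' e"] conjI rr(1)[OF e])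
    next
      case False
      have "r' e \<in> phi B" unfolding phi_def using False e by blast
      moreover have "r e \<notin> phi B"
      proof
        assume "r e \<in> phi B"
        then obtain e' where e': "e' \<in> M" "r e = r' e'" using False unfolding phi_def by blast
        have "r e \<in> e'" using rr(6)[OF e'(1)] e'(2) by simp
        then have "e' = e" using disj e e'(1) rr(5)[OF e] by blast
        then show False using e'(2) rr(2)[OF e] by simp
      qed
      moreover have "e = {r' e, r e}" using rr(1)[OF e] by (simp add: insert_commute)
      ultimately show ?thesis unfolding crossing_def
        by (intro exI[of _ "r' e"] exI[of _ "r e"] conjI)
    qed
    ultimately show ?thesis by blast
  qed
  have inj: "inj_on phi (Pow (V - R'))"
  proof (rule inj_onI)
    fix B1 B2 assume B: "B1 \<in> Pow (V - R')" "B2 \<in> Pow (V - R')" "phi B1 = phi B2"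
    have phiback: "phi C - R' = C" if hC: "C \<in> Pow (V - R')" for C
    proof -
      have "{r' e | e. e \<in> M \<and> r e \<notin> C} \<subseteq> R'" unfolding R'_def by blast
      then show ?thesis using hC unfolding phi_def by blast
    qed
    have "B1 = phi B1 - R'" using phiback[OF B(1)] by simp
    also have "\<dots> = phi B2 - R'" using B(3) by simp
    also have "\<dots> = B2" using phiback[OF B(2)] .
    finally show "B1 = B2" .
  qed
  have "2 ^ (card V - card M) = card (Pow (V - R'))"
    using finV R'V cardR' by (simp add: card_Pow card_Diff_subset finite_subset)
  also have "\<dots> = card (phi ` Pow (V - R'))" using card_image[OF inj] by simp
  also have "\<dots> \<le> card {A \<in> Pow V. \<forall>e\<in>M. crossing A e}"
    by (rule card_mono) (use finV phi_sub in auto)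
  finally show ?thesis .
qed

lemma matchings_count:
  assumes sg: "simple_graph V E"
  shows "finite {M. is_matching E M}" "card {M. is_matching E M} \<le> card V ^ card V"
proof -
  have finE: "finite E" and finV: "finite V"
    and edges: "\<forall>e\<in>E. \<exists>u v. u \<in> V \<and> v \<in> V \<and> u \<noteq> v \<and> e = {u, v}"
    using simple_graph_facts[OF sg] by auto
  have "{M. is_matching E M} \<subseteq> Pow E" unfolding is_matching_def by auto
  then show finM: "finite {M. is_matching E M}" using finE by (meson finite_Pow_iff finite_subset)
  define g where "g f = {{v, f v} | v. v \<in> V \<and> f v \<noteq> v}" for f :: "'a \<Rightarrow> 'a"
  have sub: "{M. is_matching E M} \<subseteq> g ` (V \<rightarrow>\<^sub>E V)"
  proof
    fix M assume "M \<in> {M. is_matching E M}"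
    then have M: "is_matching E M" by simp
    have ME: "M \<subseteq> E" using M unfolding is_matching_def by blast
    have disj: "e1 = e2" if "e1 \<in> M" "e2 \<in> M" "x \<in> e1" "x \<in> e2" for e1 e2 x
      using M that unfolding is_matching_def by blast
    define f where "f = (\<lambda>v\<in>V. if \<exists>e\<in>M. v \<in> e then (SOME u. {v, u} \<in> M) else v)"
    have fok: "{v, f v} \<in> M" if hv: "v \<in> V" "\<exists>e\<in>M. v \<in> e" for v
    proof -
      obtain e where e: "e \<in> M" "v \<in> e" using hv by blast
      obtain a b where ab: "e = {a, b}" using edges ME e by blast
      have "v = a \<or> v = b" using e(2) unfolding ab by blast
      then have "\<exists>u. {v, u} \<in> M"
      proof
        assume "v = a" then show ?thesis using e(1) ab by blast
      next
        assume "v = b"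
        then have "{v, a} = e" using ab by (simp add: insert_commute)
        then show ?thesis using e(1) by blast
      qed
      then have "{v, (SOME u. {v, u} \<in> M)} \<in> M" by (rule someI_ex)
      then show ?thesis unfolding f_def using hv by simp
    qed
    have fE: "f \<in> V \<rightarrow>\<^sub>E V"
    proof
      fix v assume v: "v \<in> V"
      show "f v \<in> V"
      proof (cases "\<exists>e\<in>M. v \<in> e")
        case True
        have "{v, f v} \<in> E" using fok[OF v True] ME by blast
        then have "{v, f v} \<subseteq> V" by (rule edge_card2(2)[OF sg])
        then show ?thesis by simp
      next
        case False then show ?thesis unfolding f_def using v by simp
      qed
    next
      fix v assume "v \<notin> V" then show "f v = undefined" unfolding f_def by simp
    qed
    have "g f = M"
    proof
      show "g f \<subseteq> M"
      proof
        fix e assume "e \<in> g f"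
        then obtain v where v: "e = {v, f v}" "v \<in> V" "f v \<noteq> v" unfolding g_def by blast
        have "\<exists>e\<in>M. v \<in> e"
        proof (rule ccontr)
          assume "\<not> (\<exists>e\<in>M. v \<in> e)"
          then have "f v = v" unfolding f_def using v(2) by simp
          then show False using v(3) by simp
        qed
        then show "e \<in> M" using fok v by simp
      qed
    next
      show "M \<subseteq> g f"
      proof
        fix e assume e: "e \<in> M"
        obtain a b where ab: "a \<in> V" "b \<in> V" "a \<noteq> b" "e = {a, b}" using edges ME e by blast
        have ex: "\<exists>e\<in>M. a \<in> e" using e ab by blast
        have afa: "{a, f a} \<in> M" using fok[OF ab(1) ex] .
        have "a \<in> e" using ab by simp
        then have fae: "{a, f a} = e" using disj[OF afa e, of a] by simp
        then have "{a, f a} = {a, b}" using ab(4) by simp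
        then have fab: "f a = b" using ab(3) by (auto simp: doubleton_eq_iff)
        have "e = {a, f a} \<and> a \<in> V \<and> f a \<noteq> a" using fae ab(1,3) fab by simp
        then show "e \<in> g f" unfolding g_def by (intro CollectI exI[of _ a]) simp
      qed
    qed
    then show "M \<in> g ` (V \<rightarrow>\<^sub>E V)" using fE by blast
  qed
  have "card {M. is_matching E M} \<le> card (g ` (V \<rightarrow>\<^sub>E V))"
    by (rule card_mono[OF _ sub]) (use finV in \<open>simp add: finite_PiE\<close>)
  also have "\<dots> \<le> card (V \<rightarrow>\<^sub>E V)" by (rule card_image_le) (use finV in \<open>simp add: finite_PiE\<close>)
  also have "\<dots> = card V ^ card V" using finV by (simp add: card_PiE)
  finally show "card {M. is_matching E M} \<le> card V ^ card V" .
qed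

lemma q_bound:
  fixes n m :: nat
  assumes "2 * m \<le> n"
  shows "(2::real) ^ n * (2/3) ^ n \<le> 2 ^ (n - m)"
proof -
  have "(2::nat) ^ (n + m) \<le> 3 ^ n"
  proof (rule power2_le_imp_le)
    have "((2::nat) ^ (n + m))\<^sup>2 = 2 ^ (2 * n + 2 * m)" by (simp add: power_mult[symmetric] algebra_simps)
    also have "\<dots> \<le> 2 ^ (3 * n)" using assms by (intro power_increasing) auto
    also have "\<dots> = 8 ^ n" by (simp add: power_mult)
    also have "\<dots> \<le> 9 ^ n" by (intro power_mono) auto
    also have "\<dots> = (3 ^ 2) ^ n" by simp
    also have "\<dots> = 3 ^ (2 * n)" by (rule power_mult[symmetric])
    also have "\<dots> = (3 ^ n)\<^sup>2" by (simp add: power_mult[symmetric] mult.commute)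
    finally show "((2::nat) ^ (n + m))\<^sup>2 \<le> (3 ^ n)\<^sup>2" .
  qed simp
  then have h1: "(2::real) ^ n * 2 ^ m \<le> 3 ^ n"
    by (metis of_nat_le_iff of_nat_numeral of_nat_power power_add)
  have mn: "m \<le> n" using assms by simp
  have e1: "(2::real) ^ (n - m) = 2 ^ n / 2 ^ m" using mn by (simp add: power_diff)
  have e2: "(2::real) ^ n * (2/3) ^ n = 2 ^ n * 2 ^ n / 3 ^ n" by (simp add: power_divide)
  have "2 ^ n * 2 ^ n / 3 ^ n \<le> (2::real) ^ n / 2 ^ m"
  proof -
    have "2 ^ n * 2 ^ n * 2 ^ m \<le> (2::real) ^ n * 3 ^ n"
      using h1 by (simp add: mult.assoc mult_left_mono)
    then show ?thesis by (simp add: divide_simps mult.commute mult.left_commute)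
  qed
  then show ?thesis using e1 e2 by simp
qed

lemma cover_exists:
  assumes sg: "simple_graph V E" and n1: "1 \<le> card V"
    and NN: "real N > real (card V) * ln (real (card V)) * 1.5 ^ card V"
  shows "\<exists>fam. \<forall>M. is_matching E M \<longrightarrow> (\<exists>a<N. \<forall>e\<in>M. crossing (fam a) e)"
proof -
  define n where "n = card V"
  have finV: "finite V" using simple_graph_facts[OF sg] by blast
  define MM where "MM = {M. is_matching E M}"
  have finMM: "finite MM" and cardMM: "card MM \<le> n ^ n"
    using matchings_count[OF sg] unfolding MM_def n_def by auto
  define covA where "covA M = {A \<in> Pow V. \<forall>e\<in>M. crossing A e}" for M
  define bad where "bad M = PiE {..<N} (\<lambda>_. Pow V - covA M)" for M
  define Tup where "Tup = PiE {..<N} (\<lambda>_. Pow V)"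
  define q :: real where "q = (2/3) ^ n"
  have finTup: "finite Tup" unfolding Tup_def using finV by (simp add: finite_PiE)
  have cardTup: "card Tup = (2 ^ n) ^ N" unfolding Tup_def n_def using finV by (simp add: card_PiE card_Pow)
  have badsub: "bad M \<subseteq> Tup" for M unfolding bad_def Tup_def by (auto simp: PiE_iff)
  have cov_le: "card (covA M) \<le> 2 ^ n" for M
  proof -
    have "card (covA M) \<le> card (Pow V)" unfolding covA_def using finV by (intro card_mono) auto
    then show ?thesis using finV unfolding n_def by (simp add: card_Pow)
  qed
  have cardbad: "real (card (bad M)) \<le> (2 ^ n * (1 - q)) ^ N" if M: "M \<in> MM" for M
  proof -
    have "card (bad M) = (card (Pow V - covA M)) ^ N" unfolding bad_def by (simp add: card_PiE)
    also have "card (Pow V - covA M) = 2 ^ n - card (covA M)"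
      using finV unfolding covA_def n_def by (subst card_Diff_subset) (auto simp: card_Pow)
    finally have cb: "real (card (bad M)) = (2 ^ n - real (card (covA M))) ^ N"
      using cov_le[of M] by (simp add: of_nat_diff)
    have m2: "2 * card M \<le> n" using matching_size[OF sg] M unfolding MM_def n_def by auto
    have "2 ^ (n - card M) \<le> card (covA M)"
      using covers_count[OF sg] M unfolding MM_def covA_def n_def by auto
    then have "real (2 ^ (n - card M)) \<le> real (card (covA M))" by (simp only: of_nat_le_iff)
    then have r1: "(2::real) ^ (n - card M) \<le> real (card (covA M))" by simp
    have "(2::real) ^ n * q \<le> real (card (covA M))"
      using q_bound[OF m2] r1 unfolding q_def by linarith
    then have "2 ^ n - real (card (covA M)) \<le> 2 ^ n * (1 - q)" by (simp add: algebra_simps)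
    moreover have "0 \<le> 2 ^ n - real (card (covA M))"
    proof -
      have "real (card (covA M)) \<le> real ((2::nat) ^ n)" using cov_le[of M] by (simp only: of_nat_le_iff)
      then show ?thesis by simp
    qed
    ultimately show ?thesis unfolding cb by (intro power_mono) auto
  qed
  have npos: "0 < real n" using n1 unfolding n_def by simp
  have qpos: "0 < q" unfolding q_def by simp
  have q1: "q \<le> 1" unfolding q_def by (simp add: power_le_one)
  have Nq: "real N * q > real n * ln (real n)"
  proof -
    have "real N * q > real n * ln (real n) * 1.5 ^ n * q"
      using NN qpos unfolding n_def by (intro mult_strict_right_mono) auto
    moreover have "(1.5::real) ^ n * q = 1" unfolding q_def by (simp add: power_mult_distrib[symmetric])
    ultimately show ?thesis by (simp add: mult.assoc)
  qed
  have pw: "(1 - q) ^ N \<le> exp (- (real N * q))"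
  proof -
    have "(1 - q) ^ N \<le> exp (- q) ^ N"
      using q1 exp_ge_add_one_self[of "- q"] by (intro power_mono) auto
    also have "\<dots> = exp (real N * (- q))" by (rule exp_of_nat_mult[symmetric])
    finally show ?thesis by simp
  qed
  have ex: "exp (- (real N * q)) < 1 / real n ^ n"
  proof -
    have "exp (- (real N * q)) < exp (- (real n * ln (real n)))" using Nq by simp
    also have "exp (real n * ln (real n)) = real n ^ n"
      using npos by (simp add: exp_of_nat_mult)
    then have "exp (- (real n * ln (real n))) = 1 / real n ^ n" by (simp add: exp_minus field_simps)
    finally show ?thesis .
  qed
  have "(\<Sum>M\<in>MM. real (card (bad M))) \<le> (\<Sum>M\<in>MM. (2 ^ n * (1 - q)) ^ N)"
    using cardbad by (intro sum_mono) auto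
  also have "\<dots> = real (card MM) * ((2 ^ n) ^ N * (1 - q) ^ N)" by (simp add: power_mult_distrib)
  also have "\<dots> < (2 ^ n) ^ N"
  proof -
    have "real (card MM) * (1 - q) ^ N \<le> real n ^ n * (1 - q) ^ N"
      using cardMM q1 by (intro mult_right_mono) (auto simp: of_nat_power[symmetric] simp del: of_nat_power)
    also have "\<dots> \<le> real n ^ n * exp (- (real N * q))" using pw npos by (intro mult_left_mono) auto
    also have "\<dots> < real n ^ n * (1 / real n ^ n)" using ex npos by (intro mult_strict_left_mono) auto
    also have "\<dots> = 1" using npos by simp
    finally have "real (card MM) * (1 - q) ^ N < 1" .
    then have "real (card MM) * (1 - q) ^ N * (2 ^ n) ^ N < 1 * (2 ^ n) ^ N"
      by (intro mult_strict_right_mono) auto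
    then show ?thesis by (simp add: algebra_simps)
  qed
  finally have sumlt: "(\<Sum>M\<in>MM. real (card (bad M))) < real (card Tup)" unfolding cardTup by simp
  have "card (\<Union>M\<in>MM. bad M) \<le> (\<Sum>M\<in>MM. card (bad M))" using finMM by (rule card_UN_le)
  then have "real (card (\<Union>M\<in>MM. bad M)) \<le> real (\<Sum>M\<in>MM. card (bad M))" by (simp only: of_nat_le_iff)
  then have "real (card (\<Union>M\<in>MM. bad M)) < real (card Tup)" using sumlt by simp
  then have lt: "card (\<Union>M\<in>MM. bad M) < card Tup" by simp
  have "\<not> Tup \<subseteq> (\<Union>M\<in>MM. bad M)"
  proof
    assume sub: "Tup \<subseteq> (\<Union>M\<in>MM. bad M)"
    have "(\<Union>M\<in>MM. bad M) \<subseteq> Tup" using badsub by blast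
    then have "finite (\<Union>M\<in>MM. bad M)" using finTup by (rule finite_subset)
    then have "card Tup \<le> card (\<Union>M\<in>MM. bad M)" using sub by (rule card_mono)
    then show False using lt by simp
  qed
  then obtain f where f: "f \<in> Tup" "\<forall>M\<in>MM. f \<notin> bad M" by blast
  have "\<forall>M. is_matching E M \<longrightarrow> (\<exists>a<N. \<forall>e\<in>M. crossing (f a) e)"
  proof (intro allI impI)
    fix M assume "is_matching E M"
    then have "f \<notin> bad M" using f(2) unfolding MM_def by blast
    moreover have "\<forall>a<N. f a \<in> Pow V" "f \<in> extensional {..<N}" using f(1) unfolding Tup_def by (auto simp: PiE_iff)
    ultimately obtain a where "a < N" "f a \<notin> Pow V - covA M" unfolding bad_def by (auto simp: PiE_iff)
    then show "\<exists>a<N. \<forall>e\<in>M. crossing (f a) e" using \<open>\<forall>a<N. f a \<in> Pow V\<close> unfolding covA_def by blast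
  qed
  then show ?thesis by blast
qed


lemma ln2_ge: "1/2 \<le> ln (2::real)"
proof -
  have "exp (1/2::real) ^ 2 = exp 1"
    unfolding power2_eq_square exp_add[symmetric] by simp
  also have "\<dots> \<le> 2 ^ 2" using e_less_272 by simp
  finally have h: "exp (1/2::real) ^ 2 \<le> 2 ^ 2" .
  have "exp (1/2::real) \<le> 2" by (rule power2_le_imp_le[OF h]) simp
  moreover have "(1/2 \<le> ln (2::real)) = (exp (1/2) \<le> (2::real))" by (rule ln_ge_iff) simp
  ultimately show ?thesis by simp
qed

lemma ln_ge1: "3 \<le> x \<Longrightarrow> 1 \<le> ln (x::real)"
proof -
  assume x: "3 \<le> x"
  have "exp 1 \<le> x" using e_less_272 x by simp
  moreover have "(1 \<le> ln x) = (exp 1 \<le> x)" by (rule ln_ge_iff) (use x in simp)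
  ultimately show ?thesis by simp
qed

lemma xc_le: "has_ext_with_ineqs D P m \<Longrightarrow> xc D P \<le> m"
  unfolding xc_def by (rule Least_le)

lemma edges_card_bound:
  assumes sg: "simple_graph V E"
  shows "2 * card E \<le> card V * (card V - 1)"
proof -
  have finV: "finite V" using simple_graph_facts[OF sg] by blast
  have "E \<subseteq> {B. B \<subseteq> V \<and> card B = 2}" using edge_card2[OF sg] by auto
  then have "card E \<le> card {B. B \<subseteq> V \<and> card B = 2}"
    by (intro card_mono) (use finV in \<open>simp add: finite_subset\<close>)
  also have "\<dots> = card V choose 2" using n_subsets[OF finV] by simp
  also have "\<dots> = card V * (card V - 1) div 2" by (rule choose_two)
  finally show ?thesis by linarith
qed

theorem theorem4:
  fixes V :: "'a set" and E :: "'a set set"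
  assumes "simple_graph V E"
  shows "real (xc E (matching_polytope E))
           \<le> ln (real (card V)) * real (card V) ^ 3 * 1.5 ^ card V"
proof -
  note sg = assms
  define n where "n = card V"
  have finV: "finite V" and finE: "finite E"
    and edges: "\<forall>e\<in>E. \<exists>u v. u \<in> V \<and> v \<in> V \<and> u \<noteq> v \<and> e = {u, v}"
    using simple_graph_facts[OF sg] by auto
  have rhs0: "0 \<le> ln (real n) * real n ^ 3 * 1.5 ^ n"
  proof (cases "n = 0")
    case True then show ?thesis by simp
  next
    case False then show ?thesis by simp
  qed
  show ?thesis
  proof (cases "E = {}")
    case True
    have mE: "is_matching E M \<longleftrightarrow> M = {}" for M using True unfolding is_matching_def by auto
    have "{indicator M | M. is_matching E M} = {indicator {} :: 'a set \<Rightarrow> real}" using mE by auto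
    then have mp: "matching_polytope E = {\<lambda>_. 0}"
      unfolding matching_polytope_def by (simp add: conv_hull_fun_single fun_eq_iff)
    have "has_ext_with_ineqs E (matching_polytope E) 0"
      unfolding has_ext_with_ineqs_def mp
    proof (intro exI)
      have "{y::nat \<Rightarrow> real. (\<forall>j\<ge>0. y j = 0) \<and> (\<forall>r<0. (\<Sum>j<0. (\<lambda>_ _. 0) r j * y j) \<le> (\<lambda>_. 0) r) \<and>
             (\<forall>r<0. (\<Sum>j<0. (\<lambda>_ _. 0) r j * y j) = (\<lambda>_. 0) r)} = {\<lambda>_. 0}" by auto
      note h = this
      show "(\<lambda>y i. if i \<in> E then (\<Sum>j<0. (\<lambda>_ _. 0) i j * y j) + (\<lambda>_. 0) i else 0) `
        {y::nat \<Rightarrow> real. (\<forall>j\<ge>0. y j = 0) \<and> (\<forall>r<0. (\<Sum>j<0. (\<lambda>_ _. 0) r j * y j) \<le> (\<lambda>_. 0) r) \<and>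
             (\<forall>r<0. (\<Sum>j<0. (\<lambda>_ _. 0) r j * y j) = (\<lambda>_. 0) r)} = {\<lambda>_. 0}"
        unfolding h by (simp add: fun_eq_iff)
    qed
    then have "xc E (matching_polytope E) \<le> 0" by (rule xc_le)
    then have "xc E (matching_polytope E) = 0" by simp
    then show ?thesis using rhs0 unfolding n_def by simp
  next
    case False
    then obtain e0 where e0: "e0 \<in> E" by blast
    obtain u v where uv: "u \<in> V" "v \<in> V" "u \<noteq> v" "e0 = {u, v}" using edges e0 by blast
    have n2: "2 \<le> n" unfolding n_def
    proof -
      have "card {u, v} = 2" using uv by simp
      moreover have "card {u, v} \<le> card V" using uv finV by (intro card_mono) auto
      ultimately show "2 \<le> card V" by simp
    qed
    have Ebound: "2 * card E \<le> n * (n - 1)" using edges_card_bound[OF sg] unfolding n_def .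
    show ?thesis
    proof (cases "n = 2")
      case True
      have Vuv: "V = {u, v}"
      proof -
        have s1: "{u, v} \<subseteq> V" using uv by auto
        have s2: "card {u, v} = card V" using uv True unfolding n_def by simp
        show ?thesis using card_subset_eq[OF finV s1 s2] by simp
      qed
      have cov: "\<forall>M. is_matching E M \<longrightarrow> (\<exists>a<(1::nat). \<forall>e\<in>M. crossing ((\<lambda>_. {u}) a) e)"
      proof (intro allI impI)
        fix M assume M: "is_matching E M"
        have "\<forall>e\<in>M. crossing {u} e"
        proof
          fix e assume "e \<in> M"
          then have "e \<in> E" using M unfolding is_matching_def by blast
          then obtain x y where xy: "x \<in> V" "y \<in> V" "x \<noteq> y" "e = {x, y}" using edges by blast
          then have "e = {u, v}" using Vuv by auto
          then show "crossing {u} e" unfolding crossing_def using uv by blast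
        qed
        then show "\<exists>a<(1::nat). \<forall>e\<in>M. crossing ((\<lambda>_. {u}) a) e" by (intro exI[where x="0::nat"]) simp
      qed
      have "has_ext_with_ineqs E (matching_polytope E) (1 * (card E + card V + 1))"
        by (rule ext_from_cover[OF sg cov])
      then have "xc E (matching_polytope E) \<le> 1 * (card E + card V + 1)" by (rule xc_le)
      moreover have "card E \<le> 1" using Ebound True by simp
      ultimately have "xc E (matching_polytope E) \<le> 4" using True unfolding n_def by simp
      then have "real (xc E (matching_polytope E)) \<le> 4" by simp
      also have "(4::real) \<le> ln (real n) * real n ^ 3 * 1.5 ^ n"
      proof -
        have "ln (real n) * real n ^ 3 * 1.5 ^ n = ln 2 * 18" using True by (simp add: power2_eq_square)
        then show ?thesis using ln2_ge by linarith
      qed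
      finally show ?thesis unfolding n_def .
    next
      case False
      then have n3: "3 \<le> n" using n2 by simp
      define nn where "nn = real n"
      have nn3: "3 \<le> nn" using n3 unfolding nn_def by simp
      have lnn: "1 \<le> ln nn" using ln_ge1[OF nn3] .
      define a where "a = nn * ln nn * 1.5 ^ n"
      have p15: "(1.5::real) ^ 3 \<le> 1.5 ^ n" using n3 by (intro power_increasing) auto
      have a10: "10 \<le> a"
      proof -
        have "3 * 1 * 1.5 ^ 3 \<le> nn * ln nn * 1.5 ^ n"
          using nn3 lnn p15 by (intro mult_mono) auto
        moreover have "(3::real) * 1 * 1.5 ^ 3 = 81/8" by (simp add: power3_eq_cube)
        ultimately show ?thesis unfolding a_def by linarith
      qed
      define N where "N = nat \<lfloor>a\<rfloor> + 1"
      have fl: "real (nat \<lfloor>a\<rfloor>) = of_int \<lfloor>a\<rfloor>" using a10 by simp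
      have Ngt: "real N > a" unfolding N_def using fl by linarith
      have Nle: "real N \<le> a + 1" unfolding N_def using fl by linarith
      obtain fam where fam: "\<forall>M. is_matching E M \<longrightarrow> (\<exists>a<N. \<forall>e\<in>M. crossing (fam a) e)"
      proof -
        have c1: "1 \<le> card V" using n3 unfolding n_def by simp
        have c2: "real N > real (card V) * ln (real (card V)) * 1.5 ^ card V"
          using Ngt unfolding a_def nn_def n_def .
        show ?thesis using cover_exists[OF sg c1 c2] that by blast
      qed
      have "has_ext_with_ineqs E (matching_polytope E) (N * (card E + card V + 1))"
        by (rule ext_from_cover[OF sg fam])
      then have xcN: "xc E (matching_polytope E) \<le> N * (card E + n + 1)"
        unfolding n_def by (rule xc_le)
      have mE: "real (card E) \<le> nn * (nn - 1) / 2"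
      proof -
        have "real (2 * card E) \<le> real (n * (n - 1))" using Ebound by (simp only: of_nat_le_iff)
        then show ?thesis using n3 unfolding nn_def by (simp add: of_nat_diff)
      qed
      have "real (xc E (matching_polytope E)) \<le> real (N * (card E + n + 1))"
        using xcN by (simp only: of_nat_le_iff)
      also have "\<dots> = real N * (real (card E) + nn + 1)" unfolding nn_def by (simp add: algebra_simps)
      also have "\<dots> \<le> (a + 1) * (nn * (nn - 1) / 2 + nn + 1)"
        using Nle mE nn3 by (intro mult_mono) auto
      also have "\<dots> \<le> a * nn ^ 2"
      proof -
        have sq: "nn * nn \<ge> 3 * nn" using nn3 by (intro mult_right_mono) auto
        have q0: "0 \<le> nn * nn - nn - 2" using nn3 sq by linarith
        have "10 * (nn * nn - nn - 2) \<le> a * (nn * nn - nn - 2)" using a10 q0 by (intro mult_right_mono) auto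
        moreover note sq
        moreover have "10 * (nn * nn - nn - 2) = 10 * (nn * nn) - 10 * nn - 20" by (simp add: algebra_simps)
        ultimately have "a * (nn * nn - nn - 2) \<ge> nn * nn + nn + 2" using nn3 by linarith
        note H = this
        have "(a + 1) * (nn * (nn - 1) / 2 + nn + 1) = (a * (nn * nn) + a * nn + 2 * a + (nn * nn + nn + 2)) / 2"
          by (simp add: field_simps)
        also have "\<dots> \<le> (a * (nn * nn) + a * nn + 2 * a + a * (nn * nn - nn - 2)) / 2"
          using H by (intro divide_right_mono add_left_mono) auto
        also have "\<dots> = a * nn ^ 2" by (simp add: power2_eq_square algebra_simps)
        finally show ?thesis .
      qed
      also have "\<dots> = ln (real n) * real n ^ 3 * 1.5 ^ n"
        unfolding a_def nn_def by (simp add: power2_eq_square power3_eq_cube)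
      finally show ?thesis unfolding n_def .
    qed
  qed
qed

end
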